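(* Let $N\ge2$, let $\rho_1,\dots,\rho_N$ be two-qubit density operators ($\rho_k$ on qubits $((k-1)_2,k_1)$) with fidelities $F_k=\langle\Psi_{00}|\rho_k|\Psi_{00}\rangle$, let $\rho_{\mathrm{in}}=\bigotimes_k\rho_k$, and let $\mathcal P$ be any swap-and-correct protocol with non-postselected swapping channel $\Lambda_{\mathcal P}$. Let $F'=\langle\Psi_{00}|\Lambda_{\mathcal P}(\rho_{\mathrm{in}})|\Psi_{00}\rangle$ and $F'_{\mathcal W}=\langle\Psi_{00}|\Lambda_{\mathcal P}(\bigotimes_{k}\mathcal W(\rho_k))|\Psi_{00}\rangle$. If $\epsilon_k=1-F_k<\epsilon$ for all $k$, then $$|F'-F'_{\mathcal W}|\le\binom N2\epsilon^2+\mathcal O(N^3\epsilon^3).$$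
   Context: Bell states: $|\Psi_{mn}\rangle=(I_2\otimes X^mZ^n)\tfrac{1}{\sqrt2}(|00\rangle+|11\rangle)$. Werner twirl: $\mathcal W(\rho)=\frac{4F-1}{3}|\Psi_{00}\rangle\langle\Psi_{00}|+\frac{1-F}{3}I_4$ with $F=\langle\Psi_{00}|\rho|\Psi_{00}\rangle$. Let $A=\{I,X,Z,XZ\}$. Repeater chain: nodes $0,\dots,N$; end node $0$ holds qubit $0_2$, end node $N$ holds qubit $N_1$, each repeater node $k\in\{1,\dots,N-1\}$ holds qubits $k_1,k_2$. A syndrome $\vec s\in A^{N-1}$ has $s_k=X^mZ^n$ meaning the Bell-state measurement at node $k$ on $(k_1,k_2)$ projected onto $|\Psi_{s_k}\rangle:=|\Psi_{mn}\rangle_{k_1k_2}$. A swap-and-correct protocol is a map $\mathcal P:A^{N-1}\to A^{N+1}$, $\vec s\mapsto(\mathcal P_0(\vec s),\dots,\mathcal P_N(\vec s))$ (Pauli corrections at nodes $0,\dots,N$; for repeater nodes applied to qubit $k_1$ before the BSM) such that (A) for some permutation $\alpha$ of $\{1,\dots,N-1\}$, each $\mathcal P_{\alpha(k)}(\vec s)$ depends only on $s_{\alpha(1)},\dots,s_{\alpha(k-1)}$; (B) for every $\vec s$ the normalised output from $|\Psi_{00}\rangle\langle\Psi_{00}|^{\otimes N}$ is $|\Psi_{00}\rangle\langle\Psi_{00}|$. With $C_{\vec s}$ applying $\mathcal P_0(\vec s)$ to $0_2$, $\mathcal P_N(\vec s)$ to $N_1$ and $\mathcal P_k(\vec s)$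 to $k_1$, set $\Lambda_{\mathcal P,\vec s}(\rho)=\mathrm{Tr}_{\text{repeaters}}[(\bigotimes_{k}|\Psi_{s_k}\rangle\langle\Psi_{s_k}|)C_{\vec s}\rho C_{\vec s}^\dagger]$ and $\Lambda_{\mathcal P}=\sum_{\vec s}\Lambda_{\mathcal P,\vec s}$ (output on $(0_2,N_1)$). The $\mathcal O$-term is as $N\epsilon\to0$. *)

theory Defs
  imports Complex_Main "HOL-Library.FuncSet"
begin

text \<open>A qubit basis label is a bool (False = |0>, True = |1>). A two-qubit
basis label is a pair of bools. Operators are given by their matrix elements.\<close>

type_synonym qb2 = "bool \<times> bool"
type_synonym op1 = "bool \<Rightarrow> bool \<Rightarrow> complex"
type_synonym op2 = "qb2 \<Rightarrow> qb2 \<Rightarrow> complex"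

definition pI :: op1 where "pI i j = (if i = j then 1 else 0)"
definition pX :: op1 where "pX i j = (if i \<noteq> j then 1 else 0)"
definition pZ :: op1 where "pZ i j = (if i = j then (if i then -1 else 1) else 0)"

definition mmul1 :: "op1 \<Rightarrow> op1 \<Rightarrow> op1" where
  "mmul1 A B i j = (\<Sum>k\<in>UNIV. A i k * B k j)"

text \<open>The Pauli \<open>X^m Z^n\<close> labelled by \<open>(m,n)\<close>; the set \<open>A = {I,X,Z,XZ}\<close>
  is represented by \<open>bool \<times> bool\<close>.\<close>
definition pauli :: "bool \<times> bool \<Rightarrow> op1" where
  "pauli s = mmul1 (if fst s then pX else pI) (if snd s then pZ else pI)"

definition phi0 :: "qb2 \<Rightarrow> complex" where
  "phi0 x = (if fst x = snd x then complex_of_real (1 / sqrt 2) else 0)"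

definition bell :: "bool \<times> bool \<Rightarrow> qb2 \<Rightarrow> complex" where
  "bell s x = (\<Sum>c\<in>UNIV. \<Sum>d\<in>UNIV. pI (fst x) c * pauli s (snd x) d * phi0 (c, d))"

definition bellproj :: "bool \<times> bool \<Rightarrow> op2" where
  "bellproj s x y = bell s x * cnj (bell s y)"

definition fid :: "op2 \<Rightarrow> complex" where
  "fid \<rho> = (\<Sum>i\<in>UNIV. \<Sum>j\<in>UNIV. cnj (bell (False, False) i) * \<rho> i j * bell (False, False) j)"

definition tr2 :: "op2 \<Rightarrow> complex" where
  "tr2 \<rho> = (\<Sum>i\<in>UNIV. \<rho> i i)"

definition dens :: "op2 \<Rightarrow> bool" where
  "dens \<rho> \<longleftrightarrow>
     (\<forall>v :: qb2 \<Rightarrow> complex.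
        Im (\<Sum>i\<in>UNIV. \<Sum>j\<in>UNIV. cnj (v i) * \<rho> i j * v j) = 0 \<and>
        Re (\<Sum>i\<in>UNIV. \<Sum>j\<in>UNIV. cnj (v i) * \<rho> i j * v j) \<ge> 0)
     \<and> tr2 \<rho> = 1"

definition werner :: "op2 \<Rightarrow> op2" where
  "werner \<rho> i j = (4 * fid \<rho> - 1) / 3 * bellproj (False, False) i j
                    + (1 - fid \<rho>) / 3 * (if i = j then 1 else 0)"

text \<open>Link \<open>k \<in> {1..N}\<close> consists of qubits \<open>((k-1)_2, k_1)\<close>. A basis configuration
  of the whole chain is a map \<open>x\<close> on \<open>{1..N}\<close> with \<open>x k = (bit of (k-1)_2, bit of k_1)\<close>.
  Repeater bits are a map \<open>R\<close> on \<open>{1..N-1}\<close> with \<open>R k = (bit of k_1, bit of k_2)\<close>.\<close>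

definition cfgs :: "nat \<Rightarrow> (nat \<Rightarrow> qb2) set" where
  "cfgs N = PiE {1..N} (\<lambda>_. UNIV)"

definition reps :: "nat \<Rightarrow> (nat \<Rightarrow> qb2) set" where
  "reps N = PiE {1..N-1} (\<lambda>_. UNIV)"

definition syns :: "nat \<Rightarrow> (nat \<Rightarrow> bool \<times> bool) set" where
  "syns N = PiE {1..N-1} (\<lambda>_. UNIV)"

definition tens :: "nat \<Rightarrow> (nat \<Rightarrow> op2) \<Rightarrow> (nat \<Rightarrow> qb2) \<Rightarrow> (nat \<Rightarrow> qb2) \<Rightarrow> complex" where
  "tens N \<rho>s x y = (\<Prod>k\<in>{1..N}. \<rho>s k (x k) (y k))"

text \<open>Global configuration from end bits \<open>a\<close> (qubit \<open>0_2\<close>), \<open>b\<close> (qubit \<open>N_1\<close>)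
  and repeater bits \<open>R\<close>.\<close>
definition cfg :: "nat \<Rightarrow> bool \<Rightarrow> bool \<Rightarrow> (nat \<Rightarrow> qb2) \<Rightarrow> nat \<Rightarrow> qb2" where
  "cfg N a b R k =
     (if k \<in> {1..N}
      then (if k = 1 then a else snd (R (k - 1)), if k = N then b else fst (R k))
      else undefined)"

text \<open>Correction operator \<open>C_s\<close>: \<open>P_0(s)\<close> on \<open>0_2\<close>, \<open>P_k(s)\<close> on \<open>k_1\<close> for
  \<open>k = 1..N\<close> (repeater nodes and end node \<open>N\<close>), identity elsewhere.\<close>
definition corr :: "nat \<Rightarrow> ((nat \<Rightarrow> bool \<times> bool) \<Rightarrow> nat \<Rightarrow> bool \<times> bool)
                     \<Rightarrow> (nat \<Rightarrow> bool \<times> bool) \<Rightarrow> (nat \<Rightarrow> qb2) \<Rightarrow> (nat \<Rightarrow> qb2) \<Rightarrow> complex" where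
  "corr N P s x y = (\<Prod>k\<in>{1..N}.
      (if k = 1 then pauli (P s 0) else pI) (fst (x k)) (fst (y k))
      * pauli (P s k) (snd (x k)) (snd (y k)))"

text \<open>\<open>\<Lambda>_{P,s}(\<rho>) = Tr_rep[(\<otimes>_k |\<Psi>_{s_k}><\<Psi>_{s_k}|) C_s \<rho> C_s^\<dagger>]\<close>.\<close>
definition bellrep :: "nat \<Rightarrow> (nat \<Rightarrow> bool \<times> bool) \<Rightarrow> (nat \<Rightarrow> qb2) \<Rightarrow> complex" where
  "bellrep N s R = (\<Prod>k\<in>{1..N-1}. bell (s k) (R k))"

definition conjC :: "nat \<Rightarrow> ((nat \<Rightarrow> bool \<times> bool) \<Rightarrow> nat \<Rightarrow> bool \<times> bool)
      \<Rightarrow> (nat \<Rightarrow> bool \<times> bool) \<Rightarrow> ((nat \<Rightarrow> qb2) \<Rightarrow> (nat \<Rightarrow> qb2) \<Rightarrow> complex)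
      \<Rightarrow> (nat \<Rightarrow> qb2) \<Rightarrow> (nat \<Rightarrow> qb2) \<Rightarrow> complex" where
  "conjC N P s \<rho> x x' = (\<Sum>y\<in>cfgs N. \<Sum>y'\<in>cfgs N.
      corr N P s x y * \<rho> y y' * cnj (corr N P s x' y'))"

definition lam_s :: "nat \<Rightarrow> ((nat \<Rightarrow> bool \<times> bool) \<Rightarrow> nat \<Rightarrow> bool \<times> bool)
      \<Rightarrow> (nat \<Rightarrow> bool \<times> bool) \<Rightarrow> ((nat \<Rightarrow> qb2) \<Rightarrow> (nat \<Rightarrow> qb2) \<Rightarrow> complex) \<Rightarrow> op2" where
  "lam_s N P s \<rho> o1 o2 = (\<Sum>R\<in>reps N. \<Sum>R'\<in>reps N.
      cnj (bellrep N s R) * conjC N P s \<rho> (cfg N (fst o1) (snd o1) R) (cfg N (fst o2) (snd o2) R')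
      * bellrep N s R')"

definition lam :: "nat \<Rightarrow> ((nat \<Rightarrow> bool \<times> bool) \<Rightarrow> nat \<Rightarrow> bool \<times> bool)
      \<Rightarrow> ((nat \<Rightarrow> qb2) \<Rightarrow> (nat \<Rightarrow> qb2) \<Rightarrow> complex) \<Rightarrow> op2" where
  "lam N P \<rho> o1 o2 = (\<Sum>s\<in>syns N. lam_s N P s \<rho> o1 o2)"

text \<open>Swap-and-correct protocol: \<open>P s k\<close> is the correction \<open>\<P>_k(s)\<close> at node \<open>k \<in> {0..N}\<close>.
  (A) causal order given by a permutation \<open>\<alpha>\<close> of \<open>{1..N-1}\<close>;
  (B) for every syndrome the normalised output from \<open>|\<Psi>_00><\<Psi>_00|^{\<otimes>N}\<close> is \<open>|\<Psi>_00><\<Psi>_00|\<close>.\<close>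
definition swap_protocol :: "nat \<Rightarrow> ((nat \<Rightarrow> bool \<times> bool) \<Rightarrow> nat \<Rightarrow> bool \<times> bool) \<Rightarrow> bool" where
  "swap_protocol N P \<longleftrightarrow>
     (\<exists>\<alpha>. bij_betw \<alpha> {1..N-1} {1..N-1} \<and>
        (\<forall>k\<in>{1..N-1}. \<forall>s\<in>syns N. \<forall>s'\<in>syns N.
           (\<forall>j\<in>{1..<k}. s (\<alpha> j) = s' (\<alpha> j)) \<longrightarrow> P s (\<alpha> k) = P s' (\<alpha> k)))
     \<and> (\<forall>s\<in>syns N.
          (\<lambda>i j. lam_s N P s (tens N (\<lambda>_. bellproj (False, False))) i j
                 / tr2 (lam_s N P s (tens N (\<lambda>_. bellproj (False, False)))))
          = bellproj (False, False))"

end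

theory Submission
  imports Defs
begin


definition adj1 :: "op1 \<Rightarrow> op1" where "adj1 M i j = cnj (M j i)"
definition pxor :: "qb2 \<Rightarrow> qb2 \<Rightarrow> qb2" where "pxor x y = (fst x \<noteq> fst y, snd x \<noteq> snd y)"
definition sg :: "qb2 \<Rightarrow> qb2 \<Rightarrow> complex" where
  "sg c a = (if (fst c \<and> snd a) \<noteq> (snd c \<and> fst a) then -1 else 1)"

lemma qb2_UNIV: "(UNIV::qb2 set) = {(False,False),(False,True),(True,False),(True,True)}"
  by (auto simp: UNIV_bool)
lemma sum_qb2: "(\<Sum>x\<in>(UNIV::qb2 set). f x) = f (False,False) + f (False,True) + f (True,False) + f (True,True)"
  by (simp add: qb2_UNIV add.assoc)
lemma sum_bool: "(\<Sum>x\<in>(UNIV::bool set). f x) = f False + f True"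
  by (simp add: UNIV_bool)
lemma pauli_eq: "pauli s i j = (if i = (j \<noteq> fst s) then (if snd s \<and> j then -1 else 1) else 0)"
  by (cases s) (auto simp: pauli_def mmul1_def pX_def pZ_def pI_def UNIV_bool)
lemma pauli_cnj[simp]: "cnj (pauli s i j) = pauli s i j"
  by (simp add: pauli_eq)

definition r2 :: complex where "r2 = complex_of_real (1 / sqrt 2)"
lemma r2r2: "r2 * r2 = 1/2"
  unfolding r2_def of_real_mult[symmetric] by (simp add: real_sqrt_divide)
lemma cnj_r2[simp]: "cnj r2 = r2" by (simp add: r2_def)

lemma bell_eq: "bell s x = pauli s (snd x) (fst x) * r2"
proof -
  obtain u v where x: "x = (u,v)" by (cases x)
  show ?thesis unfolding x bell_def sum_bool
    by (cases u) (simp_all add: pI_def phi0_def r2_def)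
qed

lemma bell_bell: "cnj (bell a r) * bell b r' = pauli a (snd r) (fst r) * pauli b (snd r') (fst r') / 2"
proof -
  have "cnj (bell a r) * bell b r' = pauli a (snd r) (fst r) * pauli b (snd r') (fst r') * (r2 * r2)"
    by (simp add: bell_eq mult_ac)
  then show ?thesis by (simp add: r2r2)
qed
lemma bell_bell2: "bell a r * cnj (bell b r') = pauli a (snd r) (fst r) * pauli b (snd r') (fst r') / 2"
proof -
  have "bell a r * cnj (bell b r') = pauli a (snd r) (fst r) * pauli b (snd r') (fst r') * (r2 * r2)"
    by (simp add: bell_eq mult_ac)
  then show ?thesis by (simp add: r2r2)
qed

lemma F_orth: "(\<Sum>r\<in>UNIV. cnj (bell a r) * bell b r) = (if a = b then 1 else 0)"
  unfolding bell_bell sum_qb2 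
  by (cases a; cases b) (simp_all add: pauli_eq)

lemma F_compl: "(\<Sum>b\<in>UNIV. bell b i * cnj (bell b j)) = (if i = j then 1 else 0)"
  unfolding bell_bell2 sum_qb2
  by (cases i; cases j) (simp_all add: pauli_eq)

lemma F_unit: "mmul1 (pauli a) (adj1 (pauli a)) = pI"
  by (intro ext, cases a) (auto simp: mmul1_def adj1_def sum_bool pauli_eq pI_def)

lemma F_pI: "pauli (False,False) = pI"
  by (intro ext) (auto simp: pauli_eq pI_def)

lemma F_eig: "(\<Sum>w\<in>UNIV. pauli c u (fst w) * pauli c v (snd w) * bell a w) = sg c a * bell a (u,v)"
proof -
  have "(\<Sum>w\<in>UNIV. pauli c u (fst w) * pauli c v (snd w) * bell a w) =
     (\<Sum>w\<in>UNIV. pauli c u (fst w) * pauli c v (snd w) * pauli a (snd w) (fst w)) * r2"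
    by (simp only: bell_eq sum_distrib_right mult.assoc)
  also have "(\<Sum>w\<in>UNIV. pauli c u (fst w) * pauli c v (snd w) * pauli a (snd w) (fst w)) = sg c a * pauli a v u"
    unfolding sum_qb2 by (cases c; cases a; cases u; cases v) (simp_all add: pauli_eq sg_def)
  finally show ?thesis by (simp add: bell_eq mult_ac)
qed

lemma F_comm: "mmul1 (pauli c) (adj1 (pauli a)) i j = sg c a * mmul1 (adj1 (pauli a)) (pauli c) i j"
  by (cases c; cases a; cases i; cases j) (simp_all add: mmul1_def adj1_def sum_bool pauli_eq sg_def)

lemma F_herm: "pauli c i j * pauli c i' j' = pauli c j i * pauli c j' i'"
  by (cases c; cases i; cases j; cases i'; cases j') (simp_all add: pauli_eq)

lemma F_sgprod: "sg c (pxor a b) = sg c a * sg c b"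
  by (cases c; cases a; cases b) (auto simp: sg_def pxor_def)

lemma F_sg_pm: "sg c a = 1 \<or> sg c a = -1"
  by (simp add: sg_def)

lemma F_sg00: "sg c (False,False) = 1"
  by (simp add: sg_def)

lemma F_witness: "b \<noteq> (False,False) \<Longrightarrow> \<exists>c. sg c b = -1"
  by (cases b) (auto simp: sg_def)

lemma F_fid_bp: "fid (bellproj (False,False)) = 1"
proof -
  have "fid (bellproj (False,False)) = (\<Sum>i\<in>UNIV. cnj (bell (False, False) i) * bell (False, False) i) *
     (\<Sum>j\<in>UNIV. cnj (bell (False, False) j) * bell (False, False) j)"
    by (simp add: fid_def bellproj_def sum_product mult_ac)
  then show ?thesis by (simp add: F_orth)
qed

lemma F_pI_sum: "(\<Sum>w\<in>UNIV. pI u (fst w) * pI v (snd w) * f w) = f (u,v)"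
  unfolding sum_qb2 by (cases u; cases v) (simp_all add: pI_def)



definition qop :: "nat \<Rightarrow> (nat \<Rightarrow> op1) \<Rightarrow> (nat \<Rightarrow> op1) \<Rightarrow> (nat \<Rightarrow> qb2) \<Rightarrow> (nat \<Rightarrow> qb2) \<Rightarrow> complex" where
  "qop N \<alpha> \<beta> x y = (\<Prod>k\<in>{1..N}. \<alpha> k (fst (x k)) (fst (y k)) * \<beta> k (snd (x k)) (snd (y k)))"

definition nodevec :: "nat \<Rightarrow> (qb2 \<Rightarrow> complex) \<Rightarrow> (nat \<Rightarrow> qb2 \<Rightarrow> complex) \<Rightarrow> (nat \<Rightarrow> qb2) \<Rightarrow> complex" where
  "nodevec N e h y = e (fst (y 1), snd (y N)) * (\<Prod>k\<in>{1..N-1}. h k (snd (y k), fst (y (Suc k))))"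

definition linkvec :: "nat \<Rightarrow> (nat \<Rightarrow> qb2 \<Rightarrow> complex) \<Rightarrow> (nat \<Rightarrow> qb2) \<Rightarrow> complex" where
  "linkvec N \<phi> y = (\<Prod>k\<in>{1..N}. \<phi> k (y k))"

lemma sum_pair: "(\<Sum>w\<in>(UNIV::qb2 set). f w) = (\<Sum>u\<in>UNIV. \<Sum>v\<in>UNIV. f (u,v))"
proof -
  have "(\<Sum>u\<in>UNIV. \<Sum>v\<in>UNIV. f (u,v)) = (\<Sum>w\<in>UNIV \<times> UNIV. f w)"
    by (simp add: sum.cartesian_product)
  then show ?thesis by simp
qed

lemma sum_cfgs_prod: fixes f :: "nat \<Rightarrow> qb2 \<Rightarrow> complex" shows "(\<Sum>z\<in>cfgs N. \<Prod>k\<in>{1..N}. f k (z k)) = (\<Prod>k\<in>{1..N}. \<Sum>w\<in>UNIV. f k w)"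
  unfolding cfgs_def using prod_sum_PiE[of "{1..N}" "\<lambda>_. UNIV" f] by simp

lemma qop_mult: "(\<Sum>z\<in>cfgs N. qop N \<alpha> \<beta> x z * qop N \<alpha>' \<beta>' z y) =
   qop N (\<lambda>k. mmul1 (\<alpha> k) (\<alpha>' k)) (\<lambda>k. mmul1 (\<beta> k) (\<beta>' k)) x y"
proof -
  have "(\<Sum>z\<in>cfgs N. qop N \<alpha> \<beta> x z * qop N \<alpha>' \<beta>' z y) =
    (\<Sum>z\<in>cfgs N. \<Prod>k\<in>{1..N}. (\<alpha> k (fst (x k)) (fst (z k)) * \<alpha>' k (fst (z k)) (fst (y k))) *
        (\<beta> k (snd (x k)) (snd (z k)) * \<beta>' k (snd (z k)) (snd (y k))))"
    unfolding qop_def prod.distrib[symmetric] by (simp add: mult_ac)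
  also have "\<dots> = (\<Prod>k\<in>{1..N}. \<Sum>w\<in>UNIV. (\<alpha> k (fst (x k)) (fst w) * \<alpha>' k (fst w) (fst (y k))) *
        (\<beta> k (snd (x k)) (snd w) * \<beta>' k (snd w) (snd (y k))))"
    by (rule sum_cfgs_prod)
  also have "\<dots> = qop N (\<lambda>k. mmul1 (\<alpha> k) (\<alpha>' k)) (\<lambda>k. mmul1 (\<beta> k) (\<beta>' k)) x y"
    unfolding qop_def mmul1_def
    by (intro prod.cong refl, subst sum_pair) (simp add: sum_product)
  finally show ?thesis .
qed

lemma cfg_inv:
  assumes x: "x \<in> cfgs N" and N: "N \<ge> 2"
  shows "cfg N (fst (x (Suc 0))) (snd (x N)) (\<lambda>k. if Suc 0 \<le> k \<and> k \<le> N - Suc 0 then (snd (x k), fst (x (Suc k))) else undefined) = x"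
proof
  fix k
  show "cfg N (fst (x (Suc 0))) (snd (x N)) (\<lambda>k. if Suc 0 \<le> k \<and> k \<le> N - Suc 0 then (snd (x k), fst (x (Suc k))) else undefined) k = x k"
    using x N by (cases "k \<in> {1..N}") (auto simp: cfg_def cfgs_def PiE_def extensional_def prod_eq_iff)
qed

lemma cfg_reindex:
  assumes N: "N \<ge> 2"
  shows "(\<Sum>x\<in>cfgs N. f x) = (\<Sum>ob\<in>UNIV. \<Sum>R\<in>reps N. f (cfg N (fst ob) (snd ob) R))"
proof -
  have "(\<Sum>x\<in>cfgs N. f x) = (\<Sum>oR\<in>UNIV \<times> reps N. f (cfg N (fst (fst oR)) (snd (fst oR)) (snd oR)))"
  proof (rule sum.reindex_bij_witness[where i = "\<lambda>oR. cfg N (fst (fst oR)) (snd (fst oR)) (snd oR)"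
        and j = "\<lambda>x. ((fst (x 1), snd (x N)), \<lambda>k. if k \<in> {1..N-1} then (snd (x k), fst (x (Suc k))) else undefined)"])
    fix x assume x: "x \<in> cfgs N"
    show "cfg N (fst (fst ((fst (x 1), snd (x N)), \<lambda>k. if k \<in> {1..N - 1} then (snd (x k), fst (x (Suc k))) else undefined)))
          (snd (fst ((fst (x 1), snd (x N)), \<lambda>k. if k \<in> {1..N - 1} then (snd (x k), fst (x (Suc k))) else undefined)))
          (snd ((fst (x 1), snd (x N)), \<lambda>k. if k \<in> {1..N - 1} then (snd (x k), fst (x (Suc k))) else undefined)) = x"
    proof
      fix k
      show "cfg N (fst (fst ((fst (x 1), snd (x N)), \<lambda>k. if k \<in> {1..N - 1} then (snd (x k), fst (x (Suc k))) else undefined)))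
          (snd (fst ((fst (x 1), snd (x N)), \<lambda>k. if k \<in> {1..N - 1} then (snd (x k), fst (x (Suc k))) else undefined)))
          (snd ((fst (x 1), snd (x N)), \<lambda>k. if k \<in> {1..N - 1} then (snd (x k), fst (x (Suc k))) else undefined)) k = x k"
        using x N by (cases "k \<in> {1..N}") (auto simp: cfg_def cfgs_def PiE_def extensional_def prod_eq_iff)
    qed
    show "((fst (x 1), snd (x N)), \<lambda>k. if k \<in> {1..N - 1} then (snd (x k), fst (x (Suc k))) else undefined) \<in> UNIV \<times> reps N"
      by (auto simp: reps_def)
  next
    fix oR :: "qb2 \<times> (nat \<Rightarrow> qb2)" assume oR: "oR \<in> UNIV \<times> reps N"
    obtain ob R where oR': "oR = (ob, R)" by (cases oR)
    have R: "R \<in> reps N" using oR oR' by auto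
    have eqR: "(\<lambda>k. if k \<in> {1..N - 1} then (snd (cfg N (fst ob) (snd ob) R k), fst (cfg N (fst ob) (snd ob) R (Suc k))) else undefined) = R"
    proof
      fix k show "(if k \<in> {1..N - 1} then (snd (cfg N (fst ob) (snd ob) R k), fst (cfg N (fst ob) (snd ob) R (Suc k))) else undefined) = R k"
        using R N by (auto simp: cfg_def reps_def PiE_def extensional_def)
    qed
    show "((fst (cfg N (fst (fst oR)) (snd (fst oR)) (snd oR) 1), snd (cfg N (fst (fst oR)) (snd (fst oR)) (snd oR) N)),
           \<lambda>k. if k \<in> {1..N - 1}
               then (snd (cfg N (fst (fst oR)) (snd (fst oR)) (snd oR) k), fst (cfg N (fst (fst oR)) (snd (fst oR)) (snd oR) (Suc k)))
               else undefined) = oR"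
      unfolding oR' fst_conv snd_conv eqR using N by (simp add: cfg_def)
    show "cfg N (fst (fst oR)) (snd (fst oR)) (snd oR) \<in> cfgs N"
      by (auto simp: cfgs_def cfg_def PiE_def extensional_def)
  qed (simp add: cfg_inv N)
  also have "\<dots> = (\<Sum>ob\<in>UNIV. \<Sum>R\<in>reps N. f (cfg N (fst ob) (snd ob) R))"
    by (simp add: sum.cartesian_product case_prod_beta)
  finally show ?thesis .
qed

lemma cfg_at:
  assumes N: "N \<ge> 2" and R: "R \<in> reps N"
  shows "fst (cfg N a b R 1) = a" "snd (cfg N a b R N) = b"
    "k \<in> {1..N-1} \<Longrightarrow> (snd (cfg N a b R k), fst (cfg N a b R (Suc k))) = R k"
  using N by (auto simp: cfg_def)

lemma nodevec_cfg:
  assumes N: "N \<ge> 2" and R: "R \<in> reps N"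
  shows "nodevec N e h (cfg N (fst ob) (snd ob) R) = e ob * (\<Prod>k\<in>{1..N-1}. h k (R k))"
  unfolding nodevec_def cfg_at(1,2)[OF N R]
  by (simp add: cfg_at(3)[OF N R])

lemma node_factor:
  assumes N: "N \<ge> 2"
  shows "(\<Sum>x\<in>cfgs N. nodevec N e h x) = (\<Sum>ob\<in>UNIV. e ob) * (\<Prod>k\<in>{1..N-1}. \<Sum>r\<in>UNIV. h k r)"
proof -
  have "(\<Sum>x\<in>cfgs N. nodevec N e h x) = (\<Sum>ob\<in>UNIV. \<Sum>R\<in>reps N. e ob * (\<Prod>k\<in>{1..N-1}. h k (R k)))"
    unfolding cfg_reindex[OF N] by (intro sum.cong refl) (simp add: nodevec_cfg[OF N])
  also have "\<dots> = (\<Sum>ob\<in>UNIV. e ob) * (\<Sum>R\<in>reps N. (\<Prod>k\<in>{1..N-1}. h k (R k)))"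
    by (simp only: sum_product)
  also have "(\<Sum>R\<in>reps N. (\<Prod>k\<in>{1..N-1}. h k (R k))) = (\<Prod>k\<in>{1..N-1}. \<Sum>r\<in>UNIV. h k r)"
    unfolding reps_def using prod_sum_PiE[of "{1..N-1}" "\<lambda>_. UNIV" h] by simp
  finally show ?thesis .
qed

lemma qubit_re:
  fixes f g :: "nat \<Rightarrow> bool \<Rightarrow> complex"
  assumes N: "N \<ge> 2"
  shows "(\<Prod>k\<in>{1..N}. f k (fst (x k)) * g k (snd (x k))) =
    (f 1 (fst (x 1)) * g N (snd (x N))) * (\<Prod>k\<in>{1..N-1}. g k (snd (x k)) * f (Suc k) (fst (x (Suc k))))"
proof -
  obtain M where M: "N = Suc M" and M1: "M \<ge> 1" using N by (cases N) auto
  have a: "(\<Prod>k\<in>{1..N}. f k (fst (x k))) = f 1 (fst (x 1)) * (\<Prod>k\<in>{1..M}. f (Suc k) (fst (x (Suc k))))"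
  proof -
    have "{1..Suc M} = insert 1 {Suc 1..Suc M}" by auto
    then have "(\<Prod>k\<in>{1..Suc M}. f k (fst (x k))) = f 1 (fst (x 1)) * (\<Prod>k\<in>{Suc 1..Suc M}. f k (fst (x k)))"
      by simp
    also have "(\<Prod>k\<in>{Suc 1..Suc M}. f k (fst (x k))) = (\<Prod>k\<in>{1..M}. f (Suc k) (fst (x (Suc k))))"
      by (rule prod.shift_bounds_cl_Suc_ivl)
    finally show ?thesis unfolding M .
  qed
  have b: "(\<Prod>k\<in>{1..N}. g k (snd (x k))) = (\<Prod>k\<in>{1..M}. g k (snd (x k))) * g N (snd (x N))"
    unfolding M by simp
  show ?thesis unfolding prod.distrib a b using M by (simp add: mult_ac)
qed

lemma qop_node:
  assumes N: "N \<ge> 2"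
  shows "(\<Sum>y\<in>cfgs N. qop N \<alpha> \<beta> x y * nodevec N e h y) =
    nodevec N (\<lambda>(u,v). \<Sum>ob\<in>UNIV. \<alpha> 1 u (fst ob) * \<beta> N v (snd ob) * e ob)
              (\<lambda>k (u,v). \<Sum>r\<in>UNIV. \<beta> k u (fst r) * \<alpha> (Suc k) v (snd r) * h k r) x"
proof -
  have "(\<Sum>y\<in>cfgs N. qop N \<alpha> \<beta> x y * nodevec N e h y) = (\<Sum>y\<in>cfgs N. nodevec N
      (\<lambda>ob. \<alpha> 1 (fst (x 1)) (fst ob) * \<beta> N (snd (x N)) (snd ob) * e ob)
      (\<lambda>k r. \<beta> k (snd (x k)) (fst r) * \<alpha> (Suc k) (fst (x (Suc k))) (snd r) * h k r) y)"
  proof (intro sum.cong refl)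
    fix y
    have "qop N \<alpha> \<beta> x y = (\<alpha> 1 (fst (x 1)) (fst (y 1)) * \<beta> N (snd (x N)) (snd (y N))) *
       (\<Prod>k\<in>{1..N-1}. \<beta> k (snd (x k)) (snd (y k)) * \<alpha> (Suc k) (fst (x (Suc k))) (fst (y (Suc k))))"
      unfolding qop_def
      using qubit_re[OF N, of "\<lambda>k u. \<alpha> k (fst (x k)) u" y "\<lambda>k v. \<beta> k (snd (x k)) v"] by simp
    then show "qop N \<alpha> \<beta> x y * nodevec N e h y = nodevec N
      (\<lambda>ob. \<alpha> 1 (fst (x 1)) (fst ob) * \<beta> N (snd (x N)) (snd ob) * e ob)
      (\<lambda>k r. \<beta> k (snd (x k)) (fst r) * \<alpha> (Suc k) (fst (x (Suc k))) (snd r) * h k r) y"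
      unfolding nodevec_def by (simp add: prod.distrib mult_ac)
  qed
  also have "\<dots> = nodevec N (\<lambda>(u,v). \<Sum>ob\<in>UNIV. \<alpha> 1 u (fst ob) * \<beta> N v (snd ob) * e ob)
              (\<lambda>k (u,v). \<Sum>r\<in>UNIV. \<beta> k u (fst r) * \<alpha> (Suc k) v (snd r) * h k r) x"
    by (simp only: node_factor[OF N]) (simp add: nodevec_def case_prod_beta)
  finally show ?thesis .
qed

lemma node_inner:
  assumes N: "N \<ge> 2"
  shows "(\<Sum>x\<in>cfgs N. cnj (nodevec N e h x) * nodevec N e' h' x) =
    (\<Sum>ob\<in>UNIV. cnj (e ob) * e' ob) * (\<Prod>k\<in>{1..N-1}. \<Sum>r\<in>UNIV. cnj (h k r) * h' k r)"
proof -
  have "(\<Sum>x\<in>cfgs N. cnj (nodevec N e h x) * nodevec N e' h' x) =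
      (\<Sum>x\<in>cfgs N. nodevec N (\<lambda>ob. cnj (e ob) * e' ob) (\<lambda>k r. cnj (h k r) * h' k r) x)"
    unfolding nodevec_def by (simp add: cnj_prod prod.distrib mult_ac)
  then show ?thesis by (simp add: node_factor[OF N])
qed

lemma qop_link:
  "(\<Sum>y\<in>cfgs N. qop N \<alpha> \<beta> x y * linkvec N \<phi> y) =
    linkvec N (\<lambda>k (u,v). \<Sum>w\<in>UNIV. \<alpha> k u (fst w) * \<beta> k v (snd w) * \<phi> k w) x"
proof -
  have "(\<Sum>y\<in>cfgs N. qop N \<alpha> \<beta> x y * linkvec N \<phi> y) =
     (\<Sum>y\<in>cfgs N. \<Prod>k\<in>{1..N}. \<alpha> k (fst (x k)) (fst (y k)) * \<beta> k (snd (x k)) (snd (y k)) * \<phi> k (y k))"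
    unfolding qop_def linkvec_def by (simp add: prod.distrib)
  also have "\<dots> = (\<Prod>k\<in>{1..N}. \<Sum>w\<in>UNIV. \<alpha> k (fst (x k)) (fst w) * \<beta> k (snd (x k)) (snd w) * \<phi> k w)"
    by (rule sum_cfgs_prod)
  finally show ?thesis unfolding linkvec_def by (simp add: case_prod_beta)
qed



definition Vs :: "nat \<Rightarrow> (nat \<Rightarrow> bool \<times> bool) \<Rightarrow> (nat \<Rightarrow> qb2) \<Rightarrow> complex" where
  "Vs N s = nodevec N (bell (False,False)) (\<lambda>k. bell (s k))"

definition cA :: "((nat \<Rightarrow> bool \<times> bool) \<Rightarrow> nat \<Rightarrow> bool \<times> bool) \<Rightarrow> (nat \<Rightarrow> bool \<times> bool) \<Rightarrow> nat \<Rightarrow> op1" where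
  "cA P s k = pauli (if k = 1 then P s 0 else (False,False))"
definition cB :: "((nat \<Rightarrow> bool \<times> bool) \<Rightarrow> nat \<Rightarrow> bool \<times> bool) \<Rightarrow> (nat \<Rightarrow> bool \<times> bool) \<Rightarrow> nat \<Rightarrow> op1" where
  "cB P s k = pauli (P s k)"

lemma corr_qop: "corr N P s x y = qop N (cA P s) (cB P s) x y"
  unfolding corr_def qop_def cA_def cB_def by (intro prod.cong refl) (simp add: F_pI)

definition psi :: "nat \<Rightarrow> ((nat \<Rightarrow> bool \<times> bool) \<Rightarrow> nat \<Rightarrow> bool \<times> bool) \<Rightarrow> (nat \<Rightarrow> bool \<times> bool) \<Rightarrow> (nat \<Rightarrow> qb2) \<Rightarrow> complex" where
  "psi N P s y = (\<Sum>x\<in>cfgs N. Vs N s x * cnj (corr N P s x y))"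

lemma finite_cfgs[simp]: "finite (cfgs N)"
  unfolding cfgs_def by (intro finite_PiE) auto
lemma finite_reps[simp]: "finite (reps N)"
  unfolding reps_def by (intro finite_PiE) auto
lemma finite_syns[simp]: "finite (syns N)"
  unfolding syns_def by (intro finite_PiE) auto

lemma sum4_swap:
  "(\<Sum>a\<in>A. \<Sum>b\<in>B. \<Sum>c\<in>C. \<Sum>d\<in>D. f a b c d) = (\<Sum>c\<in>C. \<Sum>d\<in>D. \<Sum>a\<in>A. \<Sum>b\<in>B. f a b c d)"
proof -
  have "(\<Sum>a\<in>A. \<Sum>b\<in>B. \<Sum>c\<in>C. \<Sum>d\<in>D. f a b c d) = (\<Sum>a\<in>A. \<Sum>c\<in>C. \<Sum>b\<in>B. \<Sum>d\<in>D. f a b c d)"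
    by (rule sum.cong[OF refl], rule sum.swap)
  also have "\<dots> = (\<Sum>a\<in>A. \<Sum>c\<in>C. \<Sum>d\<in>D. \<Sum>b\<in>B. f a b c d)"
    by (rule sum.cong[OF refl], rule sum.cong[OF refl], rule sum.swap)
  also have "\<dots> = (\<Sum>c\<in>C. \<Sum>a\<in>A. \<Sum>d\<in>D. \<Sum>b\<in>B. f a b c d)"
    by (rule sum.swap)
  also have "\<dots> = (\<Sum>c\<in>C. \<Sum>d\<in>D. \<Sum>a\<in>A. \<Sum>b\<in>B. f a b c d)"
    by (rule sum.cong[OF refl], rule sum.swap)
  finally show ?thesis .
qed

lemma fid_lam_s:
  assumes N: "N \<ge> 2"
  shows "fid (lam_s N P s \<rho>) = (\<Sum>y\<in>cfgs N. \<Sum>y'\<in>cfgs N. cnj (psi N P s y) * \<rho> y y' * psi N P s y')"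
proof -
  let ?b = "bell (False,False)"
  have "fid (lam_s N P s \<rho>) = (\<Sum>i\<in>UNIV. \<Sum>j\<in>UNIV. \<Sum>R\<in>reps N. \<Sum>R'\<in>reps N.
      cnj (?b i * bellrep N s R) * conjC N P s \<rho> (cfg N (fst i) (snd i) R) (cfg N (fst j) (snd j) R') * (?b j * bellrep N s R'))"
    unfolding fid_def lam_s_def by (simp add: sum_distrib_left sum_distrib_right mult_ac)
  also have "\<dots> = (\<Sum>i\<in>UNIV. \<Sum>R\<in>reps N. \<Sum>j\<in>UNIV. \<Sum>R'\<in>reps N.
      cnj (?b i * bellrep N s R) * conjC N P s \<rho> (cfg N (fst i) (snd i) R) (cfg N (fst j) (snd j) R') * (?b j * bellrep N s R'))"
    by (rule sum.cong[OF refl], rule sum.swap)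
  also have "\<dots> = (\<Sum>x\<in>cfgs N. \<Sum>x'\<in>cfgs N. cnj (Vs N s x) * conjC N P s \<rho> x x' * Vs N s x')"
    unfolding cfg_reindex[OF N]
    by (intro sum.cong refl) (simp add: Vs_def nodevec_cfg[OF N] bellrep_def)
  also have "\<dots> = (\<Sum>x\<in>cfgs N. \<Sum>x'\<in>cfgs N. \<Sum>y\<in>cfgs N. \<Sum>y'\<in>cfgs N.
       cnj (Vs N s x) * corr N P s x y * \<rho> y y' * (Vs N s x' * cnj (corr N P s x' y')))"
    unfolding conjC_def by (simp add: sum_distrib_left sum_distrib_right mult_ac)
  also have "\<dots> = (\<Sum>y\<in>cfgs N. \<Sum>y'\<in>cfgs N. \<Sum>x\<in>cfgs N. \<Sum>x'\<in>cfgs N.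
       cnj (Vs N s x) * corr N P s x y * \<rho> y y' * (Vs N s x' * cnj (corr N P s x' y')))"
    by (rule sum4_swap)
  also have "\<dots> = (\<Sum>y\<in>cfgs N. \<Sum>y'\<in>cfgs N. cnj (psi N P s y) * \<rho> y y' * psi N P s y')"
    unfolding psi_def by (simp add: sum_distrib_left sum_distrib_right mult_ac)
  finally show ?thesis .
qed

lemma cnj_qop: "cnj (qop N \<alpha> \<beta> x y) = qop N (\<lambda>k. adj1 (\<alpha> k)) (\<lambda>k. adj1 (\<beta> k)) y x"
  unfolding qop_def adj1_def by (simp add: cnj_prod)

lemma sum3_swap:
  "(\<Sum>a\<in>A. \<Sum>b\<in>B. \<Sum>c\<in>C. f a b c) = (\<Sum>b\<in>B. \<Sum>c\<in>C. \<Sum>a\<in>A. f a b c)"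
proof -
  have "(\<Sum>a\<in>A. \<Sum>b\<in>B. \<Sum>c\<in>C. f a b c) = (\<Sum>b\<in>B. \<Sum>a\<in>A. \<Sum>c\<in>C. f a b c)"
    by (rule sum.swap)
  also have "\<dots> = (\<Sum>b\<in>B. \<Sum>c\<in>C. \<Sum>a\<in>A. f a b c)"
    by (rule sum.cong[OF refl], rule sum.swap)
  finally show ?thesis .
qed

lemma psi_inner:
  assumes N: "N \<ge> 2"
  shows "(\<Sum>y\<in>cfgs N. cnj (psi N P s y) * psi N P t y) =
    (\<Sum>ob\<in>UNIV. cnj (bell (False,False) ob) *
        (\<Sum>ob'\<in>UNIV. mmul1 (cA P s 1) (adj1 (cA P t 1)) (fst ob) (fst ob') * mmul1 (cB P s N) (adj1 (cB P t N)) (snd ob) (snd ob') * bell (False,False) ob')) *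
    (\<Prod>k\<in>{1..N-1}. \<Sum>r\<in>UNIV. cnj (bell (s k) r) *
        (\<Sum>r'\<in>UNIV. mmul1 (cB P s k) (adj1 (cB P t k)) (fst r) (fst r') * mmul1 (cA P s (Suc k)) (adj1 (cA P t (Suc k))) (snd r) (snd r') * bell (t k) r'))"
  (is "_ = ?rhs")
proof -
  have "(\<Sum>y\<in>cfgs N. cnj (psi N P s y) * psi N P t y) =
     (\<Sum>y\<in>cfgs N. \<Sum>x\<in>cfgs N. \<Sum>x'\<in>cfgs N. cnj (Vs N s x) * (corr N P s x y * cnj (corr N P t x' y) * Vs N t x'))"
    unfolding psi_def by (simp add: sum_distrib_left sum_distrib_right mult_ac)
  also have "\<dots> = (\<Sum>x\<in>cfgs N. \<Sum>x'\<in>cfgs N. \<Sum>y\<in>cfgs N. cnj (Vs N s x) * (corr N P s x y * cnj (corr N P t x' y) * Vs N t x'))"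
    by (rule sum3_swap)
  also have "\<dots> = (\<Sum>x\<in>cfgs N. cnj (Vs N s x) * (\<Sum>x'\<in>cfgs N.
       qop N (\<lambda>k. mmul1 (cA P s k) (adj1 (cA P t k))) (\<lambda>k. mmul1 (cB P s k) (adj1 (cB P t k))) x x' * Vs N t x'))"
  proof (intro sum.cong refl)
    fix x
    have eq: "(\<Sum>y\<in>cfgs N. corr N P s x y * cnj (corr N P t x' y)) =
       qop N (\<lambda>k. mmul1 (cA P s k) (adj1 (cA P t k))) (\<lambda>k. mmul1 (cB P s k) (adj1 (cB P t k))) x x'" for x'
      unfolding corr_qop cnj_qop qop_mult ..
    have "(\<Sum>x'\<in>cfgs N. \<Sum>y\<in>cfgs N. cnj (Vs N s x) * (corr N P s x y * cnj (corr N P t x' y) * Vs N t x')) =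
      cnj (Vs N s x) * (\<Sum>x'\<in>cfgs N. (\<Sum>y\<in>cfgs N. corr N P s x y * cnj (corr N P t x' y)) * Vs N t x')"
      by (simp add: sum_distrib_left sum_distrib_right mult_ac)
    then show "(\<Sum>x'\<in>cfgs N. \<Sum>y\<in>cfgs N. cnj (Vs N s x) * (corr N P s x y * cnj (corr N P t x' y) * Vs N t x')) =
      cnj (Vs N s x) * (\<Sum>x'\<in>cfgs N. qop N (\<lambda>k. mmul1 (cA P s k) (adj1 (cA P t k))) (\<lambda>k. mmul1 (cB P s k) (adj1 (cB P t k))) x x' * Vs N t x')"
      unfolding eq .
  qed
  also have "\<dots> = (\<Sum>x\<in>cfgs N. cnj (Vs N s x) * nodevec N
     (\<lambda>(u,v). \<Sum>ob'\<in>UNIV. mmul1 (cA P s 1) (adj1 (cA P t 1)) u (fst ob') * mmul1 (cB P s N) (adj1 (cB P t N)) v (snd ob') * bell (False,False) ob')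
     (\<lambda>k (u,v). \<Sum>r'\<in>UNIV. mmul1 (cB P s k) (adj1 (cB P t k)) u (fst r') * mmul1 (cA P s (Suc k)) (adj1 (cA P t (Suc k))) v (snd r') * bell (t k) r') x)"
    unfolding Vs_def qop_node[OF N] ..
  also have "\<dots> = ?rhs"
    unfolding Vs_def node_inner[OF N] by (simp add: case_prod_beta)
  finally show ?thesis .
qed

lemma cA_same: "mmul1 (cA P s k) (adj1 (cA P t k)) = pI" if "k \<noteq> 1"
  using that unfolding cA_def by (simp add: F_unit)

lemma mm_same: "mmul1 (pauli a) (adj1 (pauli a)) = pI" by (rule F_unit)

lemma first_diff:
  assumes sp: "swap_protocol N P" and s: "s \<in> syns N" and t: "t \<in> syns N" and st: "s \<noteq> t"
  shows "\<exists>k\<in>{1..N-1}. P s k = P t k \<and> s k \<noteq> t k"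
proof -
  obtain \<alpha> where bij: "bij_betw \<alpha> {1..N-1} {1..N-1}" and
    caus: "\<forall>k\<in>{1..N-1}. \<forall>s\<in>syns N. \<forall>s'\<in>syns N.
           (\<forall>j\<in>{1..<k}. s (\<alpha> j) = s' (\<alpha> j)) \<longrightarrow> P s (\<alpha> k) = P s' (\<alpha> k)"
    using sp unfolding swap_protocol_def by blast
  obtain j where j: "j \<in> {1..N-1}" "s j \<noteq> t j"
  proof -
    have "\<exists>j. s j \<noteq> t j" using st by (auto simp: fun_eq_iff)
    then obtain j where "s j \<noteq> t j" by blast
    moreover have "j \<in> {1..N-1}"
    proof (rule ccontr)
      assume "j \<notin> {1..N-1}"
      then have "s j = undefined" "t j = undefined" using s t PiE_arb unfolding syns_def by metis+
      then show False using calculation by simp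
    qed
    ultimately show ?thesis using that by blast
  qed
  have "j \<in> \<alpha> ` {1..N-1}" using bij j(1) by (simp add: bij_betw_def)
  then obtain m where m: "m \<in> {1..N-1}" "\<alpha> m = j" by blast
  define M where "M = {m \<in> {1..N-1}. s (\<alpha> m) \<noteq> t (\<alpha> m)}"
  have "m \<in> M" using m j unfolding M_def by auto
  then have fin: "finite M" "M \<noteq> {}" unfolding M_def by auto
  define m0 where "m0 = Min M"
  have m0M: "m0 \<in> M" unfolding m0_def using fin by (rule Min_in)
  have below: "\<forall>i\<in>{1..<m0}. s (\<alpha> i) = t (\<alpha> i)"
  proof
    fix i assume i: "i \<in> {1..<m0}"
    have "i \<in> {1..N-1}" using i m0M unfolding M_def by auto
    moreover have "i \<notin> M" using i fin m0_def by (meson Min_le atLeastLessThan_iff not_le)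
    ultimately show "s (\<alpha> i) = t (\<alpha> i)" unfolding M_def by auto
  qed
  have m0r: "m0 \<in> {1..N-1}" using m0M unfolding M_def by auto
  have "P s (\<alpha> m0) = P t (\<alpha> m0)" using caus m0r s t below by blast
  moreover have "\<alpha> m0 \<in> {1..N-1}" using bij m0r by (auto simp: bij_betw_def)
  moreover have "s (\<alpha> m0) \<noteq> t (\<alpha> m0)" using m0M unfolding M_def by auto
  ultimately show ?thesis by blast
qed

lemma psi_orth:
  assumes N: "N \<ge> 2" and sp: "swap_protocol N P" and s: "s \<in> syns N" and t: "t \<in> syns N"
  shows "(\<Sum>y\<in>cfgs N. cnj (psi N P s y) * psi N P t y) = (if s = t then 1 else 0)"
proof (cases "s = t")
  case True
  have e1: "mmul1 (cA P t k) (adj1 (cA P t k)) = pI" for k unfolding cA_def by (rule F_unit)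
  have e2: "mmul1 (cB P t k) (adj1 (cB P t k)) = pI" for k unfolding cB_def by (rule F_unit)
  show ?thesis unfolding psi_inner[OF N] True e1 e2 F_pI_sum by (simp add: F_orth)
next
  case False
  obtain k where k: "k \<in> {1..N-1}" "P s k = P t k" "s k \<noteq> t k"
    using first_diff[OF sp s t False] by blast
  have e1: "mmul1 (cA P s (Suc k)) (adj1 (cA P t (Suc k))) = pI" by (rule cA_same) (use k in auto)
  have e2: "mmul1 (cB P s k) (adj1 (cB P t k)) = pI" unfolding cB_def k(2) by (rule F_unit)
  have "(\<Sum>r\<in>UNIV. cnj (bell (s k) r) *
        (\<Sum>r'\<in>UNIV. mmul1 (cB P s k) (adj1 (cB P t k)) (fst r) (fst r') * mmul1 (cA P s (Suc k)) (adj1 (cA P t (Suc k))) (snd r) (snd r') * bell (t k) r')) = 0"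
    unfolding e1 e2 F_pI_sum using k(3) by (simp add: F_orth)
  then have "(\<Prod>k\<in>{1..N-1}. \<Sum>r\<in>UNIV. cnj (bell (s k) r) *
        (\<Sum>r'\<in>UNIV. mmul1 (cB P s k) (adj1 (cB P t k)) (fst r) (fst r') * mmul1 (cA P s (Suc k)) (adj1 (cA P t (Suc k))) (snd r) (snd r') * bell (t k) r')) = 0"
    using k(1) by (intro prod_zero) auto
  then show ?thesis unfolding psi_inner[OF N] using False by simp
qed



primrec xorN :: "(nat \<Rightarrow> qb2) \<Rightarrow> nat \<Rightarrow> qb2" where
  "xorN a 0 = (False,False)"
| "xorN a (Suc n) = pxor (xorN a n) (a (Suc n))"

definition Tc :: "nat \<Rightarrow> qb2 \<Rightarrow> (nat \<Rightarrow> qb2) \<Rightarrow> (nat \<Rightarrow> qb2) \<Rightarrow> complex" where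
  "Tc N c = qop N (\<lambda>_. pauli c) (\<lambda>_. pauli c)"

definition ea :: "nat \<Rightarrow> (nat \<Rightarrow> qb2) \<Rightarrow> (nat \<Rightarrow> qb2) \<Rightarrow> complex" where
  "ea N a = linkvec N (\<lambda>k. bell (a k))"

definition ip :: "nat \<Rightarrow> ((nat \<Rightarrow> qb2) \<Rightarrow> complex) \<Rightarrow> ((nat \<Rightarrow> qb2) \<Rightarrow> complex) \<Rightarrow> complex" where
  "ip N f g = (\<Sum>y\<in>cfgs N. cnj (f y) * g y)"

lemma sg_xorN: "(\<Prod>k\<in>{1..n}. sg c (a k)) = sg c (xorN a n)"
  by (induction n) (simp_all add: F_sg00 F_sgprod prod.cl_ivl_Suc)

lemma cnj_sg[simp]: "cnj (sg c a) = sg c a" by (simp add: sg_def)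

lemma T_link: "(\<Sum>y\<in>cfgs N. Tc N c x y * ea N a y) = (\<Prod>k\<in>{1..N}. sg c (a k)) * ea N a x"
  unfolding Tc_def ea_def qop_link[of N "\<lambda>_. pauli c" "\<lambda>_. pauli c" x "\<lambda>k. bell (a k)"]
  unfolding linkvec_def by (simp add: case_prod_beta F_eig prod.distrib)

lemma T_herm: "cnj (Tc N c y z) = Tc N c z y"
  unfolding Tc_def qop_def cnj_prod by (intro prod.cong refl) (simp add: F_herm)

lemma nodevec_scale: "nodevec N (\<lambda>ob. a * e ob) (\<lambda>k r. b k * h k r) x = (a * (\<Prod>k\<in>{1..N-1}. b k)) * nodevec N e h x"
  unfolding nodevec_def by (simp add: prod.distrib mult_ac)

lemma T_V:
  assumes N: "N \<ge> 2"
  shows "(\<Sum>x\<in>cfgs N. Tc N c z x * Vs N s x) = (sg c (False,False) * (\<Prod>k\<in>{1..N-1}. sg c (s k))) * Vs N s z"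
proof -
  have "(\<Sum>x\<in>cfgs N. Tc N c z x * Vs N s x) =
      nodevec N (\<lambda>ob. sg c (False,False) * bell (False,False) ob) (\<lambda>k r. sg c (s k) * bell (s k) r) z"
  proof -
    have e1: "(\<lambda>(u, v). sg c (False, False) * bell (False, False) (u, v)) = (\<lambda>ob. sg c (False,False) * bell (False,False) ob)"
      by auto
    have e2: "(\<lambda>k (u, v). sg c (s k) * bell (s k) (u, v)) = (\<lambda>k r. sg c (s k) * bell (s k) r)"
      by (auto simp: fun_eq_iff)
    show ?thesis
      unfolding Tc_def Vs_def qop_node[OF N] by (simp add: case_prod_beta F_eig e1 e2)
  qed
  then show ?thesis unfolding nodevec_scale Vs_def .
qed

lemma psi_alt: "psi N P s z = (\<Sum>x\<in>cfgs N. qop N (\<lambda>k. adj1 (cA P s k)) (\<lambda>k. adj1 (cB P s k)) z x * Vs N s x)"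
  unfolding psi_def corr_qop cnj_qop by (simp add: mult_ac)

lemma qop_scale: "qop N (\<lambda>k. \<lambda>i j. a k * \<alpha> k i j) (\<lambda>k. \<lambda>i j. b k * \<beta> k i j) x y =
   (\<Prod>k\<in>{1..N}. a k * b k) * qop N \<alpha> \<beta> x y"
  unfolding qop_def by (simp add: prod.distrib mult_ac)

lemma T_psi:
  assumes N: "N \<ge> 2"
  shows "\<exists>\<theta>. \<forall>y. (\<Sum>z\<in>cfgs N. Tc N c y z * psi N P s z) = \<theta> * psi N P s y"
proof -
  let ?A = "\<lambda>k. adj1 (cA P s k)" and ?B = "\<lambda>k. adj1 (cB P s k)"
  define ka where "ka = (\<Prod>k\<in>{1..N}. sg c (if k = 1 then P s 0 else (False,False)) * sg c (P s k))"
  define mu where "mu = sg c (False,False) * (\<Prod>k\<in>{1..N-1}. sg c (s k))"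
  have comm: "qop N (\<lambda>k. mmul1 (pauli c) (?A k)) (\<lambda>k. mmul1 (pauli c) (?B k)) y x =
      ka * qop N (\<lambda>k. mmul1 (?A k) (pauli c)) (\<lambda>k. mmul1 (?B k) (pauli c)) y x" for y x
  proof -
    have "qop N (\<lambda>k. mmul1 (pauli c) (?A k)) (\<lambda>k. mmul1 (pauli c) (?B k)) y x =
      qop N (\<lambda>k. \<lambda>i j. sg c (if k = 1 then P s 0 else (False,False)) * mmul1 (?A k) (pauli c) i j)
            (\<lambda>k. \<lambda>i j. sg c (P s k) * mmul1 (?B k) (pauli c) i j) y x"
      unfolding cA_def cB_def qop_def by (intro prod.cong refl) (simp add: F_comm)
    then show ?thesis unfolding qop_scale ka_def .
  qed
  have "(\<Sum>z\<in>cfgs N. Tc N c y z * psi N P s z) = ka * mu * psi N P s y" for y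
  proof -
    have "(\<Sum>z\<in>cfgs N. Tc N c y z * psi N P s z) =
        (\<Sum>x\<in>cfgs N. (\<Sum>z\<in>cfgs N. Tc N c y z * qop N ?A ?B z x) * Vs N s x)"
    proof -
      have "(\<Sum>z\<in>cfgs N. Tc N c y z * psi N P s z) = (\<Sum>z\<in>cfgs N. \<Sum>x\<in>cfgs N. Tc N c y z * qop N ?A ?B z x * Vs N s x)"
        unfolding psi_alt by (simp add: sum_distrib_left mult_ac)
      also have "\<dots> = (\<Sum>x\<in>cfgs N. \<Sum>z\<in>cfgs N. Tc N c y z * qop N ?A ?B z x * Vs N s x)"
        by (rule sum.swap)
      finally show ?thesis by (simp add: sum_distrib_right)
    qed
    also have "\<dots> = (\<Sum>x\<in>cfgs N. ka * qop N (\<lambda>k. mmul1 (?A k) (pauli c)) (\<lambda>k. mmul1 (?B k) (pauli c)) y x * Vs N s x)"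
      unfolding Tc_def qop_mult comm ..
    also have "\<dots> = ka * (\<Sum>x\<in>cfgs N. \<Sum>z\<in>cfgs N. qop N ?A ?B y z * Tc N c z x * Vs N s x)"
      unfolding Tc_def qop_mult[symmetric] by (simp add: sum_distrib_left sum_distrib_right mult_ac)
    also have "\<dots> = ka * (\<Sum>z\<in>cfgs N. \<Sum>x\<in>cfgs N. qop N ?A ?B y z * Tc N c z x * Vs N s x)"
      by (rule arg_cong[where f="\<lambda>t. ka * t"], rule sum.swap)
    also have "\<dots> = ka * (\<Sum>z\<in>cfgs N. qop N ?A ?B y z * (\<Sum>x\<in>cfgs N. Tc N c z x * Vs N s x))"
      by (simp add: sum_distrib_left sum_distrib_right mult_ac)
    also have "\<dots> = ka * mu * psi N P s y"
      unfolding T_V[OF N] psi_alt mu_def by (simp add: sum_distrib_left mult_ac)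
    finally show ?thesis .
  qed
  then show ?thesis by blast
qed

lemma ip_T:
  "ip N (ea N a) (\<lambda>y. \<Sum>z\<in>cfgs N. Tc N c y z * g z) = (\<Prod>k\<in>{1..N}. sg c (a k)) * ip N (ea N a) g"
proof -
  have "ip N (ea N a) (\<lambda>y. \<Sum>z\<in>cfgs N. Tc N c y z * g z) =
      (\<Sum>z\<in>cfgs N. cnj (\<Sum>y\<in>cfgs N. Tc N c z y * ea N a y) * g z)"
  proof -
    have "ip N (ea N a) (\<lambda>y. \<Sum>z\<in>cfgs N. Tc N c y z * g z) = (\<Sum>y\<in>cfgs N. \<Sum>z\<in>cfgs N. cnj (ea N a y) * Tc N c y z * g z)"
      unfolding ip_def by (simp add: sum_distrib_left mult_ac)
    also have "\<dots> = (\<Sum>z\<in>cfgs N. \<Sum>y\<in>cfgs N. cnj (ea N a y) * Tc N c y z * g z)"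
      by (rule sum.swap)
    also have "\<dots> = (\<Sum>z\<in>cfgs N. cnj (\<Sum>y\<in>cfgs N. Tc N c z y * ea N a y) * g z)"
      by (simp add: cnj_sum T_herm sum_distrib_left sum_distrib_right mult_ac)
    finally show ?thesis .
  qed
  also have "\<dots> = (\<Prod>k\<in>{1..N}. sg c (a k)) * ip N (ea N a) g"
    unfolding T_link ip_def by (simp add: cnj_prod sum_distrib_left mult_ac)
  finally show ?thesis .
qed

lemma ea_psi_zero:
  assumes N: "N \<ge> 2" and nz: "ip N (ea N (\<lambda>_. (False,False))) (psi N P s) \<noteq> 0"
    and a: "xorN a N \<noteq> (False,False)"
  shows "ip N (ea N a) (psi N P s) = 0"
proof -
  obtain c where c: "sg c (xorN a N) = -1" using F_witness[OF a] by blast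
  obtain \<theta> where th: "\<And>y. (\<Sum>z\<in>cfgs N. Tc N c y z * psi N P s z) = \<theta> * psi N P s y"
    using T_psi[OF N, of c P s] by blast
  have rel: "\<theta> * ip N (ea N b) (psi N P s) = (\<Prod>k\<in>{1..N}. sg c (b k)) * ip N (ea N b) (psi N P s)" for b
  proof -
    have "ip N (ea N b) (\<lambda>y. \<Sum>z\<in>cfgs N. Tc N c y z * psi N P s z) = \<theta> * ip N (ea N b) (psi N P s)"
      unfolding th ip_def by (simp add: sum_distrib_left mult_ac)
    then show ?thesis unfolding ip_T by metis
  qed
  have "\<theta> = 1" using rel[of "\<lambda>_. (False,False)"] nz by (simp add: F_sg00)
  then have "ip N (ea N a) (psi N P s) = - ip N (ea N a) (psi N P s)"
    using rel[of a] unfolding sg_xorN c by simp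
  then show ?thesis by simp
qed



lemma square_unitary:
  fixes U :: "'a \<Rightarrow> 'b \<Rightarrow> complex"
  assumes fI: "finite I" and fS: "finite S" and card: "card I = card S"
    and orth: "\<And>s t. s \<in> S \<Longrightarrow> t \<in> S \<Longrightarrow> (\<Sum>a\<in>I. cnj (U a s) * U a t) = (if s = t then 1 else 0)"
    and a: "a \<in> I" and b: "b \<in> I"
  shows "(\<Sum>s\<in>S. U a s * cnj (U b s)) = (if a = b then 1 else 0)"
proof -
  define Q where "Q a b = (\<Sum>s\<in>S. U a s * cnj (U b s))" for a b
  have Qc: "cnj (Q a b) = Q b a" for a b unfolding Q_def by (simp add: mult.commute)
  have Q2: "(\<Sum>b\<in>I. Q a b * Q b c) = Q a c" for a c
  proof -
    have "(\<Sum>b\<in>I. Q a b * Q b c) = (\<Sum>b\<in>I. \<Sum>s\<in>S. \<Sum>t\<in>S. U a s * cnj (U c t) * (cnj (U b s) * U b t))"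
      unfolding Q_def by (simp add: sum_distrib_left sum_distrib_right mult_ac)
    also have "\<dots> = (\<Sum>s\<in>S. \<Sum>t\<in>S. \<Sum>b\<in>I. U a s * cnj (U c t) * (cnj (U b s) * U b t))"
      by (rule sum3_swap)
    also have "\<dots> = (\<Sum>s\<in>S. \<Sum>t\<in>S. U a s * cnj (U c t) * (if s = t then 1 else 0))"
      by (intro sum.cong refl) (simp add: sum_distrib_left[symmetric] orth)
    also have "\<dots> = Q a c" unfolding Q_def using fS by (simp add: if_distrib cong: if_cong)
    finally show ?thesis .
  qed
  define r where "r a = (\<Sum>b\<in>I. (cmod (Q a b))^2)" for a
  have Qr: "Q a a = of_real (r a)" for a
  proof -
    have "Q a a = (\<Sum>b\<in>I. Q a b * cnj (Q a b))" using Q2[of a a] by (simp add: Qc)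
    also have "\<dots> = of_real (r a)" unfolding r_def of_real_sum by (intro sum.cong refl) (simp add: complex_norm_square[symmetric] del: of_real_power)
    finally show ?thesis .
  qed
  have r_ge: "r a \<ge> (cmod (Q a b))^2" if "b \<in> I" for a b
    unfolding r_def using that fI by (intro member_le_sum) auto
  have r_le1: "r a \<le> 1" if "a \<in> I" for a
  proof -
    have r0: "r a \<ge> 0" unfolding r_def by (simp add: sum_nonneg)
    have "cmod (Q a a) = r a" using Qr[of a] r0 by simp
    then have "r a \<ge> (r a)^2" using r_ge[OF that, of a] by simp
    moreover note r0
    ultimately show ?thesis
    proof (rule_tac ccontr)
      assume h: "r a \<ge> (r a)^2" "r a \<ge> 0" "\<not> r a \<le> 1"
      then have "r a * 1 < r a * r a" by (intro mult_strict_left_mono) auto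
      then show False using h by (simp add: power2_eq_square)
    qed
  qed
  have sumQ: "(\<Sum>a\<in>I. Q a a) = of_nat (card S)"
  proof -
    have "(\<Sum>a\<in>I. Q a a) = (\<Sum>s\<in>S. \<Sum>a\<in>I. cnj (U a s) * U a s)"
      unfolding Q_def by (subst sum.swap) (simp add: mult.commute)
    also have "\<dots> = (\<Sum>s\<in>S. 1)" by (intro sum.cong refl) (simp add: orth)
    finally show ?thesis by simp
  qed
  have sumr: "(\<Sum>a\<in>I. r a) = real (card I)"
  proof -
    have "complex_of_real (\<Sum>a\<in>I. r a) = complex_of_real (real (card I))"
      using sumQ unfolding Qr card by (simp add: of_real_sum)
    then show ?thesis using of_real_eq_iff by blast
  qed
  have r1: "r a = 1" if "a \<in> I" for a
  proof -
    have "(\<Sum>a\<in>I. 1 - r a) = 0" using sumr by (simp add: sum_subtractf)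
    moreover have "\<forall>a\<in>I. 0 \<le> 1 - r a" using r_le1 by auto
    ultimately have "\<forall>a\<in>I. 1 - r a = 0"
      using sum_nonneg_eq_0_iff[OF fI, of "\<lambda>a. 1 - r a"] by simp
    then show ?thesis using that by auto
  qed
  show ?thesis
  proof (cases "a = b")
    case True then show ?thesis using Qr[of a] r1[OF a] by (simp add: Q_def)
  next
    case False
    have "r a = (\<Sum>b'\<in>I - {a, b}. (cmod (Q a b'))^2) + (cmod (Q a a))^2 + (cmod (Q a b))^2"
    proof -
      have "I = insert a (insert b (I - {a, b}))" using a b by auto
      then have "r a = (\<Sum>b'\<in>insert a (insert b (I - {a, b})). (cmod (Q a b'))^2)" unfolding r_def by simp
      also have "\<dots> = (cmod (Q a a))^2 + ((cmod (Q a b))^2 + (\<Sum>b'\<in>I - {a, b}. (cmod (Q a b'))^2))"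
        using fI False by simp
      finally show ?thesis by simp
    qed
    moreover have "(\<Sum>b'\<in>I - {a, b}. (cmod (Q a b'))^2) \<ge> 0" by (simp add: sum_nonneg)
    moreover have "(cmod (Q a a))^2 = 1" using Qr[of a] r1[OF a] by simp
    ultimately have "(cmod (Q a b))^2 \<le> 0" using r1[OF a] by linarith
    then have "Q a b = 0" by simp
    then show ?thesis using False by (simp add: Q_def)
  qed
qed



definition Iset :: "nat \<Rightarrow> (nat \<Rightarrow> qb2) set" where
  "Iset N = {a \<in> cfgs N. xorN a N = (False,False)}"

definition pk :: "op2 \<Rightarrow> qb2 \<Rightarrow> complex" where
  "pk \<rho> b = (\<Sum>i\<in>UNIV. \<Sum>j\<in>UNIV. cnj (bell b i) * \<rho> i j * bell b j)"

lemma finite_Iset[simp]: "finite (Iset N)" unfolding Iset_def by simp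

lemma tens_bellproj: "tens N (\<lambda>_. bellproj (False,False)) y y' =
   ea N (\<lambda>_. (False,False)) y * cnj (ea N (\<lambda>_. (False,False)) y')"
  unfolding tens_def ea_def linkvec_def bellproj_def by (simp add: prod.distrib cnj_prod)

lemma fid_div: "fid (\<lambda>i j. M i j / c) = fid M / c"
  unfolding fid_def by (simp add: sum_divide_distrib)

lemma B_nonzero:
  assumes N: "N \<ge> 2" and sp: "swap_protocol N P" and s: "s \<in> syns N"
  shows "ip N (ea N (\<lambda>_. (False,False))) (psi N P s) \<noteq> 0"
proof
  assume z: "ip N (ea N (\<lambda>_. (False,False))) (psi N P s) = 0"
  let ?e = "ea N (\<lambda>_. (False,False))"
  let ?M = "lam_s N P s (tens N (\<lambda>_. bellproj (False, False)))"
  have "fid ?M = (\<Sum>y\<in>cfgs N. \<Sum>y'\<in>cfgs N. (cnj (psi N P s y) * ?e y) * (cnj (?e y') * psi N P s y'))"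
    unfolding fid_lam_s[OF N] tens_bellproj by (simp add: mult_ac)
  also have "\<dots> = (\<Sum>y\<in>cfgs N. cnj (psi N P s y) * ?e y) * ip N ?e (psi N P s)"
    unfolding ip_def by (simp add: sum_product)
  finally have f0: "fid ?M = 0" using z by simp
  have "(\<lambda>i j. ?M i j / tr2 ?M) = bellproj (False, False)"
    using sp s unfolding swap_protocol_def by blast
  then have "fid (bellproj (False, False)) = fid ?M / tr2 ?M" using fid_div by metis
  then show False using f0 F_fid_bp by simp
qed

lemma ea_complete:
  assumes y: "y \<in> cfgs N" and y': "y' \<in> cfgs N"
  shows "(\<Sum>a\<in>cfgs N. ea N a y * cnj (ea N a y')) = (if y = y' then 1 else 0)"
proof -
  have "(\<Sum>a\<in>cfgs N. ea N a y * cnj (ea N a y')) = (\<Sum>a\<in>cfgs N. \<Prod>k\<in>{1..N}. bell (a k) (y k) * cnj (bell (a k) (y' k)))"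
    unfolding ea_def linkvec_def by (simp add: prod.distrib cnj_prod)
  also have "\<dots> = (\<Prod>k\<in>{1..N}. \<Sum>b\<in>UNIV. bell b (y k) * cnj (bell b (y' k)))"
    by (rule sum_cfgs_prod)
  also have "\<dots> = (\<Prod>k\<in>{1..N}. if y k = y' k then 1 else 0)"
    by (simp add: F_compl)
  also have "\<dots> = (if y = y' then 1 else 0)"
  proof (cases "y = y'")
    case True then show ?thesis by simp
  next
    case False
    then obtain k where k: "y k \<noteq> y' k" by (auto simp: fun_eq_iff)
    have "k \<in> {1..N}"
    proof (rule ccontr)
      assume "k \<notin> {1..N}"
      then have "y k = undefined" "y' k = undefined" using y y' PiE_arb unfolding cfgs_def by metis+
      then show False using k by simp
    qed
    then have "(\<Prod>k\<in>{1..N}. if y k = y' k then 1 else (0::complex)) = 0"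
      using k by (intro prod_zero) auto
    then show ?thesis using False by simp
  qed
  finally show ?thesis .
qed

lemma expand:
  assumes y: "y \<in> cfgs N"
  shows "f y = (\<Sum>a\<in>cfgs N. ea N a y * ip N (ea N a) f)"
proof -
  have "(\<Sum>a\<in>cfgs N. ea N a y * ip N (ea N a) f) = (\<Sum>a\<in>cfgs N. \<Sum>y'\<in>cfgs N. ea N a y * cnj (ea N a y') * f y')"
    unfolding ip_def by (simp add: sum_distrib_left mult_ac)
  also have "\<dots> = (\<Sum>y'\<in>cfgs N. (\<Sum>a\<in>cfgs N. ea N a y * cnj (ea N a y')) * f y')"
    by (subst sum.swap) (simp add: sum_distrib_right)
  also have "\<dots> = (\<Sum>y'\<in>cfgs N. (if y = y' then 1 else 0) * f y')"
    by (intro sum.cong refl) (simp add: ea_complete[OF y])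
  also have "\<dots> = f y" using y by (simp add: if_distrib[where f="\<lambda>c. c * _"] cong: if_cong)
  finally show ?thesis by simp
qed

lemma psi_expand:
  assumes N: "N \<ge> 2" and sp: "swap_protocol N P" and s: "s \<in> syns N" and y: "y \<in> cfgs N"
  shows "psi N P s y = (\<Sum>a\<in>Iset N. ea N a y * ip N (ea N a) (psi N P s))"
proof -
  have "psi N P s y = (\<Sum>a\<in>cfgs N. ea N a y * ip N (ea N a) (psi N P s))" by (rule expand[OF y])
  also have "\<dots> = (\<Sum>a\<in>Iset N. ea N a y * ip N (ea N a) (psi N P s))"
  proof (rule sum.mono_neutral_right)
    show "\<forall>a\<in>cfgs N - Iset N. ea N a y * ip N (ea N a) (psi N P s) = 0"
      using ea_psi_zero[OF N B_nonzero[OF N sp s]] unfolding Iset_def by auto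
  qed (auto simp: Iset_def)
  finally show ?thesis .
qed

lemma U_orth:
  assumes N: "N \<ge> 2" and sp: "swap_protocol N P" and s: "s \<in> syns N" and t: "t \<in> syns N"
  shows "(\<Sum>a\<in>Iset N. cnj (ip N (ea N a) (psi N P s)) * ip N (ea N a) (psi N P t)) = (if s = t then 1 else 0)"
proof -
  have "(if s = t then 1 else 0) = (\<Sum>y\<in>cfgs N. cnj (psi N P s y) * psi N P t y)"
    using psi_orth[OF N sp s t] by simp
  also have "\<dots> = (\<Sum>y\<in>cfgs N. \<Sum>a\<in>Iset N. cnj (psi N P s y) * ea N a y * ip N (ea N a) (psi N P t))"
    by (intro sum.cong refl) (simp add: psi_expand[OF N sp t] sum_distrib_left mult_ac)
  also have "\<dots> = (\<Sum>a\<in>Iset N. (\<Sum>y\<in>cfgs N. cnj (psi N P s y) * ea N a y) * ip N (ea N a) (psi N P t))"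
    by (subst sum.swap) (simp add: sum_distrib_right)
  also have "\<dots> = (\<Sum>a\<in>Iset N. cnj (ip N (ea N a) (psi N P s)) * ip N (ea N a) (psi N P t))"
    unfolding ip_def by (simp add: cnj_sum mult_ac)
  finally show ?thesis by simp
qed



lemma xorN_cong: "(\<forall>k\<in>{1..n}. a k = b k) \<Longrightarrow> xorN a n = xorN b n"
  by (induction n) auto

lemma pxor_self: "pxor x x = (False,False)" by (simp add: pxor_def)
lemma pxor_eq0: "pxor x y = (False,False) \<Longrightarrow> y = x" by (auto simp: pxor_def prod_eq_iff)

lemma card_syns_Iset:
  assumes N: "N \<ge> 2"
  shows "card (syns N) = card (Iset N)"
proof -
  obtain M where M: "N = Suc M" using N by (cases N) auto
  define f where "f s = s(N := xorN s M)" for s :: "nat \<Rightarrow> qb2"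
  define g where "g a = a(N := undefined)" for a :: "nat \<Rightarrow> qb2"
  have xf: "xorN (s(N := b)) M = xorN s M" for s b by (rule xorN_cong) (auto simp: M)
  have "bij_betw f (syns N) (Iset N)"
  proof (rule bij_betw_byWitness[where f' = g])
    show "\<forall>s\<in>syns N. g (f s) = s"
    proof
      fix s assume s: "s \<in> syns N"
      have "s N = undefined" using s PiE_arb[of s "{1..N-1}" "\<lambda>_. UNIV" N] M unfolding syns_def by auto
      then show "g (f s) = s" unfolding f_def g_def by auto
    qed
    show "\<forall>a\<in>Iset N. f (g a) = a"
    proof
      fix a assume a: "a \<in> Iset N"
      have "pxor (xorN a M) (a N) = (False,False)" using a unfolding Iset_def M by simp
      then have "a N = xorN a M" by (rule pxor_eq0)
      moreover have "xorN (g a) M = xorN a M" unfolding g_def by (rule xf)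
      ultimately show "f (g a) = a" unfolding f_def g_def by auto
    qed
    show "f ` syns N \<subseteq> Iset N"
    proof
      fix a assume "a \<in> f ` syns N"
      then obtain s where s: "s \<in> syns N" and a: "a = f s" by blast
      have "{1..N} = insert N {1..N-1}" using M by auto
      then have "a \<in> cfgs N" unfolding a f_def cfgs_def using s unfolding syns_def by (simp add: PiE_fun_upd)
      moreover have "xorN a N = (False,False)" unfolding a f_def M by (simp add: xf[unfolded M] pxor_self)
      ultimately show "a \<in> Iset N" unfolding Iset_def by simp
    qed
    show "g ` Iset N \<subseteq> syns N"
    proof
      fix s assume "s \<in> g ` Iset N"
      then obtain a where a: "a \<in> Iset N" and s: "s = g a" by blast
      have "a \<in> PiE (insert N {1..N-1}) (\<lambda>_. UNIV)" using a M unfolding Iset_def cfgs_def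
        by (metis (no_types, lifting) atLeastAtMostSuc_conv diff_Suc_1 le_add1 mem_Collect_eq plus_1_eq_Suc)
      moreover have "N \<notin> {1..N-1}" using M by auto
      ultimately show "s \<in> syns N" unfolding s g_def syns_def using fun_upd_in_PiE[of N "{1..N-1}" a "\<lambda>_. UNIV"] by blast
    qed
  qed
  then show ?thesis by (rule bij_betw_same_card)
qed

lemma projector:
  assumes N: "N \<ge> 2" and sp: "swap_protocol N P" and y: "y \<in> cfgs N" and y': "y' \<in> cfgs N"
  shows "(\<Sum>s\<in>syns N. psi N P s y' * cnj (psi N P s y)) = (\<Sum>a\<in>Iset N. ea N a y' * cnj (ea N a y))"
proof -
  define U where "U a s = ip N (ea N a) (psi N P s)" for a s
  have uni: "(\<Sum>s\<in>syns N. U a s * cnj (U b s)) = (if a = b then 1 else 0)" if "a \<in> Iset N" "b \<in> Iset N" for a b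
    using square_unitary[of "Iset N" "syns N" U, OF finite_Iset finite_syns card_syns_Iset[OF N, symmetric]] that
      U_orth[OF N sp] unfolding U_def by blast
  have "(\<Sum>s\<in>syns N. psi N P s y' * cnj (psi N P s y)) =
      (\<Sum>s\<in>syns N. \<Sum>a\<in>Iset N. \<Sum>b\<in>Iset N. ea N a y' * cnj (ea N b y) * (U a s * cnj (U b s)))"
    unfolding psi_expand[OF N sp _ y] psi_expand[OF N sp _ y'] U_def
    by (intro sum.cong refl) (simp add: psi_expand[OF N sp _ y] psi_expand[OF N sp _ y'] cnj_sum sum_product mult_ac)
  also have "\<dots> = (\<Sum>a\<in>Iset N. \<Sum>b\<in>Iset N. \<Sum>s\<in>syns N. ea N a y' * cnj (ea N b y) * (U a s * cnj (U b s)))"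
    by (rule sum3_swap)
  also have "\<dots> = (\<Sum>a\<in>Iset N. \<Sum>b\<in>Iset N. ea N a y' * cnj (ea N b y) * (if a = b then 1 else 0))"
    by (intro sum.cong refl) (simp add: sum_distrib_left[symmetric] uni)
  also have "\<dots> = (\<Sum>a\<in>Iset N. ea N a y' * cnj (ea N a y))"
    by (simp add: if_distrib[where f="\<lambda>c. _ * c"] cong: if_cong)
  finally show ?thesis .
qed



lemma fid_sum: "fid (\<lambda>i j. \<Sum>s\<in>S. M s i j) = (\<Sum>s\<in>S. fid (M s))"
proof -
  have "fid (\<lambda>i j. \<Sum>s\<in>S. M s i j) = (\<Sum>i\<in>UNIV. \<Sum>j\<in>UNIV. \<Sum>s\<in>S. cnj (bell (False, False) i) * M s i j * bell (False, False) j)"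
    unfolding fid_def by (simp add: sum_distrib_left sum_distrib_right)
  also have "\<dots> = (\<Sum>s\<in>S. \<Sum>i\<in>UNIV. \<Sum>j\<in>UNIV. cnj (bell (False, False) i) * M s i j * bell (False, False) j)"
    by (rule sum3_swap[symmetric])
  finally show ?thesis unfolding fid_def .
qed

lemma tens_pk: "(\<Sum>y\<in>cfgs N. \<Sum>y'\<in>cfgs N. cnj (ea N a y) * tens N \<rho>s y y' * ea N a y') =
   (\<Prod>k\<in>{1..N}. pk (\<rho>s k) (a k))"
proof -
  have "(\<Sum>y\<in>cfgs N. \<Sum>y'\<in>cfgs N. cnj (ea N a y) * tens N \<rho>s y y' * ea N a y') =
      (\<Sum>y\<in>cfgs N. \<Sum>y'\<in>cfgs N. \<Prod>k\<in>{1..N}. cnj (bell (a k) (y k)) * \<rho>s k (y k) (y' k) * bell (a k) (y' k))"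
    unfolding ea_def linkvec_def tens_def by (simp add: prod.distrib cnj_prod)
  also have "\<dots> = (\<Sum>y\<in>cfgs N. \<Prod>k\<in>{1..N}. \<Sum>w\<in>UNIV. cnj (bell (a k) (y k)) * \<rho>s k (y k) w * bell (a k) w)"
    by (intro sum.cong refl) (rule sum_cfgs_prod)
  also have "\<dots> = (\<Prod>k\<in>{1..N}. \<Sum>v\<in>UNIV. \<Sum>w\<in>UNIV. cnj (bell (a k) v) * \<rho>s k v w * bell (a k) w)"
    by (rule sum_cfgs_prod)
  finally show ?thesis unfolding pk_def .
qed

lemma partA:
  assumes N: "N \<ge> 2" and sp: "swap_protocol N P"
  shows "fid (lam N P (tens N \<rho>s)) = (\<Sum>a\<in>Iset N. \<Prod>k\<in>{1..N}. pk (\<rho>s k) (a k))"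
proof -
  let ?r = "tens N \<rho>s"
  have "lam N P ?r = (\<lambda>i j. \<Sum>s\<in>syns N. lam_s N P s ?r i j)" unfolding lam_def by (intro ext) simp
  then have "fid (lam N P ?r) = (\<Sum>s\<in>syns N. fid (lam_s N P s ?r))" by (simp add: fid_sum)
  also have "\<dots> = (\<Sum>s\<in>syns N. \<Sum>y\<in>cfgs N. \<Sum>y'\<in>cfgs N. cnj (psi N P s y) * ?r y y' * psi N P s y')"
    by (simp add: fid_lam_s[OF N])
  also have "\<dots> = (\<Sum>y\<in>cfgs N. \<Sum>y'\<in>cfgs N. \<Sum>s\<in>syns N. cnj (psi N P s y) * ?r y y' * psi N P s y')"
    by (rule sum3_swap)
  also have "\<dots> = (\<Sum>y\<in>cfgs N. \<Sum>y'\<in>cfgs N. ?r y y' * (\<Sum>s\<in>syns N. psi N P s y' * cnj (psi N P s y)))"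
    by (simp add: sum_distrib_left mult_ac)
  also have "\<dots> = (\<Sum>y\<in>cfgs N. \<Sum>y'\<in>cfgs N. ?r y y' * (\<Sum>a\<in>Iset N. ea N a y' * cnj (ea N a y)))"
    by (intro sum.cong refl) (simp add: projector[OF N sp])
  also have "\<dots> = (\<Sum>y\<in>cfgs N. \<Sum>y'\<in>cfgs N. \<Sum>a\<in>Iset N. cnj (ea N a y) * ?r y y' * ea N a y')"
    by (simp add: sum_distrib_left mult_ac)
  also have "\<dots> = (\<Sum>a\<in>Iset N. \<Sum>y\<in>cfgs N. \<Sum>y'\<in>cfgs N. cnj (ea N a y) * ?r y y' * ea N a y')"
    by (rule sum3_swap[symmetric])
  also have "\<dots> = (\<Sum>a\<in>Iset N. \<Prod>k\<in>{1..N}. pk (\<rho>s k) (a k))"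
    by (simp add: tens_pk)
  finally show ?thesis .
qed



definition Gs :: "(nat \<Rightarrow> qb2 \<Rightarrow> real) \<Rightarrow> nat \<Rightarrow> qb2 \<Rightarrow> real" where
  "Gs q n b = (\<Sum>a\<in>cfgs n. if xorN a n = b then (\<Prod>k\<in>{1..n}. q k (a k)) else 0)"

lemma sum_PiE_insert:
  assumes "m \<notin> S" "finite S"
  shows "(\<Sum>a\<in>PiE (insert m S) T. f a) = (\<Sum>y\<in>T m. \<Sum>g\<in>PiE S T. f (g(m := y)))"
proof -
  have "(\<Sum>a\<in>PiE (insert m S) T. f a) = (\<Sum>yg\<in>T m \<times> PiE S T. f ((\<lambda>(y, g). g(m := y)) yg))"
    unfolding PiE_insert_eq by (rule sum.reindex[OF inj_combinator[OF assms(1)], unfolded comp_def])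
  also have "\<dots> = (\<Sum>y\<in>T m. \<Sum>g\<in>PiE S T. f (g(m := y)))"
    by (simp add: sum.cartesian_product case_prod_beta)
  finally show ?thesis .
qed

lemma Gs_0: "Gs q 0 b = (if b = (False,False) then 1 else 0)"
  unfolding Gs_def cfgs_def by simp

lemma pxor_iff: "(pxor x y = b) = (y = pxor x b)"
  by (auto simp: pxor_def prod_eq_iff)

lemma Gs_Suc: "Gs q (Suc n) b = (\<Sum>c\<in>UNIV. Gs q n c * q (Suc n) (pxor c b))"
proof -
  have ins: "{1..Suc n} = insert (Suc n) {1..n}" by auto
  have "Gs q (Suc n) b = (\<Sum>y\<in>UNIV. \<Sum>g\<in>cfgs n.
      if xorN (g(Suc n := y)) (Suc n) = b then (\<Prod>k\<in>{1..Suc n}. q k ((g(Suc n := y)) k)) else 0)"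
    unfolding Gs_def cfgs_def ins by (rule sum_PiE_insert) auto
  also have "\<dots> = (\<Sum>y\<in>UNIV. \<Sum>g\<in>cfgs n.
      if y = pxor (xorN g n) b then (\<Prod>k\<in>{1..n}. q k (g k)) * q (Suc n) y else 0)"
  proof (intro sum.cong refl)
    fix y g
    have "xorN (g(Suc n := y)) n = xorN g n" by (rule xorN_cong) auto
    moreover have "(\<Prod>k\<in>{1..n}. q k ((g(Suc n := y)) k)) = (\<Prod>k\<in>{1..n}. q k (g k))"
      by (rule prod.cong) auto
    ultimately show "(if xorN (g(Suc n := y)) (Suc n) = b then (\<Prod>k\<in>{1..Suc n}. q k ((g(Suc n := y)) k)) else 0) =
      (if y = pxor (xorN g n) b then (\<Prod>k\<in>{1..n}. q k (g k)) * q (Suc n) y else 0)"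
      unfolding ins by (simp add: pxor_iff)
  qed
  also have "\<dots> = (\<Sum>g\<in>cfgs n. (\<Prod>k\<in>{1..n}. q k (g k)) * q (Suc n) (pxor (xorN g n) b))"
    by (subst sum.swap) (simp add: if_distrib cong: if_cong)
  also have "\<dots> = (\<Sum>g\<in>cfgs n. \<Sum>c\<in>UNIV. (if xorN g n = c then (\<Prod>k\<in>{1..n}. q k (g k)) else 0) * q (Suc n) (pxor c b))"
    by (intro sum.cong refl) (simp add: if_distrib[where f="\<lambda>t. t * _"] cong: if_cong)
  also have "\<dots> = (\<Sum>c\<in>UNIV. Gs q n c * q (Suc n) (pxor c b))"
    unfolding Gs_def by (subst sum.swap) (simp add: sum_distrib_right)
  finally show ?thesis .
qed

lemma Iset_Gs: "(\<Sum>a\<in>Iset N. \<Prod>k\<in>{1..N}. complex_of_real (q k (a k))) = complex_of_real (Gs q N (False,False))"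
  unfolding Gs_def Iset_def by (simp add: sum.inter_filter[symmetric] of_real_sum)



lemma sum_split_c: "(\<Sum>d\<in>(UNIV::qb2 set). f d) = f c + (\<Sum>d\<in>UNIV - {c}. f d)"
  by (simp add: sum.remove)

lemma pxor_invol: "pxor (pxor d c) c = d" by (auto simp: pxor_def prod_eq_iff)
lemma pxor_00: "pxor d c = (False,False) \<longleftrightarrow> d = c" by (auto simp: pxor_def prod_eq_iff)
lemma pxor_r0: "pxor c (False,False) = c" by (simp add: pxor_def)

lemma reidx: "(\<Sum>d\<in>UNIV - {c}. h (pxor d c)) = (\<Sum>e\<in>UNIV - {(False,False)}. h e)"
  by (rule sum.reindex_bij_witness[where i = "\<lambda>e. pxor e c" and j = "\<lambda>d. pxor d c"])
     (auto simp: pxor_invol pxor_00 pxor_def prod_eq_iff)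

lemma dist_rest: fixes q :: "qb2 \<Rightarrow> real" assumes "(\<Sum>e\<in>(UNIV::qb2 set). q e) = 1" shows "(\<Sum>e\<in>UNIV - {(False,False)}. q e) = 1 - q (False,False)"
  using sum_split_c[of q "(False,False)"] assms by linarith

lemma dist_le1: fixes q :: "qb2 \<Rightarrow> real" assumes "\<forall>e. q e \<ge> (0::real)" "(\<Sum>e\<in>UNIV. q e) = 1" shows "q c \<le> 1"
proof -
  have "(\<Sum>e\<in>UNIV - {c}. q e) \<ge> 0" by (meson assms(1) sum_nonneg)
  then show ?thesis using sum_split_c[of q c] assms(2) by simp
qed

lemma stepA:
  fixes q G :: "qb2 \<Rightarrow> real"
  assumes q0: "\<forall>e. q e \<ge> 0" and q1: "(\<Sum>e\<in>UNIV. q e) = 1" and G: "\<forall>d. 0 \<le> G d \<and> G d \<le> 1"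
  shows "0 \<le> (\<Sum>d\<in>UNIV. G d * q (pxor d c))" "(\<Sum>d\<in>UNIV. G d * q (pxor d c)) \<le> 1"
proof -
  show "0 \<le> (\<Sum>d\<in>UNIV. G d * q (pxor d c))" by (meson G q0 mult_nonneg_nonneg sum_nonneg)
  have "(\<Sum>d\<in>UNIV. G d * q (pxor d c)) \<le> (\<Sum>d\<in>UNIV. q (pxor d c))"
    by (intro sum_mono) (meson G q0 mult_left_le_one_le)
  also have "(\<Sum>d\<in>UNIV. q (pxor d c)) = q (pxor c c) + (\<Sum>e\<in>UNIV - {(False,False)}. q e)"
    by (subst sum_split_c[of _ c]) (simp add: reidx)
  also have "\<dots> = 1" using dist_rest[OF q1] by (simp add: pxor_self)
  finally show "(\<Sum>d\<in>UNIV. G d * q (pxor d c)) \<le> 1" .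
qed

lemma stepB:
  fixes q G :: "qb2 \<Rightarrow> real"
  assumes q0: "\<forall>e. q e \<ge> 0" and q1: "(\<Sum>e\<in>UNIV. q e) = 1" and G: "\<forall>d. 0 \<le> G d \<and> G d \<le> 1"
    and Gc: "G c \<le> x"
  shows "(\<Sum>d\<in>UNIV. G d * q (pxor d c)) \<le> x + (1 - q (False,False))"
proof -
  have "(\<Sum>d\<in>UNIV. G d * q (pxor d c)) = G c * q (False,False) + (\<Sum>d\<in>UNIV - {c}. G d * q (pxor d c))"
    by (subst sum_split_c[of _ c]) (simp add: pxor_00[THEN iffD2])
  also have "G c * q (False,False) \<le> x"
    using G Gc q0 dist_le1[OF q0 q1] by (meson mult_right_le_one_le order_trans)
  also have "(\<Sum>d\<in>UNIV - {c}. G d * q (pxor d c)) \<le> (\<Sum>d\<in>UNIV - {c}. q (pxor d c))"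
    by (intro sum_mono) (meson G q0 mult_left_le_one_le)
  also have "\<dots> = 1 - q (False,False)" by (simp add: reidx dist_rest[OF q1])
  finally show ?thesis by simp
qed

lemma stepD:
  fixes p Gp Gw :: "qb2 \<Rightarrow> real"
  assumes p0: "\<forall>e. p e \<ge> 0" and p1: "(\<Sum>e\<in>UNIV. p e) = 1"
    and D0: "\<bar>Gp (False,False) - Gw (False,False)\<bar> \<le> D"
    and Dc: "\<forall>c. c \<noteq> (False,False) \<longrightarrow> \<bar>Gp c - Gw c\<bar> \<le> x"
  shows "\<bar>\<Sum>c\<in>UNIV. (Gp c - Gw c) * p c\<bar> \<le> D + x * (1 - p (False,False))"
proof -
  have "\<bar>\<Sum>c\<in>UNIV. (Gp c - Gw c) * p c\<bar> =
      \<bar>(Gp (False,False) - Gw (False,False)) * p (False,False) + (\<Sum>c\<in>UNIV - {(False,False)}. (Gp c - Gw c) * p c)\<bar>"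
    by (subst sum_split_c[of _ "(False,False)"]) simp
  also have "\<dots> \<le> \<bar>(Gp (False,False) - Gw (False,False)) * p (False,False)\<bar> + \<bar>\<Sum>c\<in>UNIV - {(False,False)}. (Gp c - Gw c) * p c\<bar>"
    by (rule abs_triangle_ineq)
  also have "\<bar>(Gp (False,False) - Gw (False,False)) * p (False,False)\<bar> \<le> D"
  proof -
    have "\<bar>(Gp (False,False) - Gw (False,False)) * p (False,False)\<bar> =
        \<bar>Gp (False,False) - Gw (False,False)\<bar> * p (False,False)" using p0 by (simp add: abs_mult)
    also have "\<dots> \<le> \<bar>Gp (False,False) - Gw (False,False)\<bar>"
      using dist_le1[OF p0 p1] p0 by (simp add: mult_left_le)
    finally show ?thesis using D0 by simp
  qed
  also have "\<bar>\<Sum>c\<in>UNIV - {(False,False)}. (Gp c - Gw c) * p c\<bar> \<le> (\<Sum>c\<in>UNIV - {(False,False)}. \<bar>(Gp c - Gw c) * p c\<bar>)"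
    by (rule sum_abs)
  also have "\<dots> \<le> (\<Sum>c\<in>UNIV - {(False,False)}. x * p c)"
  proof (rule sum_mono)
    fix c assume "c \<in> UNIV - {(False,False)}"
    then have "c \<noteq> (False,False)" by simp
    then have "\<bar>Gp c - Gw c\<bar> \<le> x" using Dc by blast
    moreover have "p c \<ge> 0" using p0 by blast
    ultimately show "\<bar>(Gp c - Gw c) * p c\<bar> \<le> x * p c" by (simp add: abs_mult mult_right_mono)
  qed
  also have "\<dots> = x * (1 - p (False,False))" by (simp add: sum_distrib_left[symmetric] dist_rest[OF p1])
  finally show ?thesis by simp
qed



definition wq :: "real \<Rightarrow> qb2 \<Rightarrow> real" where
  "wq f b = (if b = (False,False) then f else (1 - f) / 3)"

lemma stepW_sym:
  fixes G :: "qb2 \<Rightarrow> real"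
  assumes "G (False,True) = G (True,True)" "G (True,False) = G (True,True)"
  shows "(\<Sum>d\<in>UNIV. G d * wq f (pxor d (False,True))) = (\<Sum>d\<in>UNIV. G d * wq f (pxor d (True,True)))"
    "(\<Sum>d\<in>UNIV. G d * wq f (pxor d (True,False))) = (\<Sum>d\<in>UNIV. G d * wq f (pxor d (True,True)))"
  using assms by (simp_all add: sum_qb2 pxor_def wq_def)

lemma stepW_eq:
  fixes G p :: "qb2 \<Rightarrow> real"
  assumes "G (False,True) = G (True,True)" "G (True,False) = G (True,True)"
    and p1: "(\<Sum>e\<in>UNIV. p e) = 1"
  shows "(\<Sum>c\<in>UNIV. G c * wq (p (False,False)) c) = (\<Sum>c\<in>UNIV. G c * p c)"
proof -
  have s: "p (False,True) + p (True,False) + p (True,True) = 1 - p (False,False)"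
    using p1 unfolding sum_qb2 by linarith
  have "(\<Sum>c\<in>UNIV. G c * p c) = G (False,False) * p (False,False) + G (True,True) * (p (False,True) + p (True,False) + p (True,True))"
    using assms unfolding sum_qb2 by (simp add: algebra_simps)
  also have "\<dots> = G (False,False) * p (False,False) + G (True,True) * (1 - p (False,False))" unfolding s ..
  finally have R: "(\<Sum>c\<in>UNIV. G c * p c) = G (False,False) * p (False,False) + G (True,True) * (1 - p (False,False))" .
  have L: "(\<Sum>c\<in>UNIV. G c * wq (p (False,False)) c) = G (False,False) * p (False,False) + G (True,True) * (1 - p (False,False))"
    using assms(1,2) unfolding sum_qb2 wq_def by (simp add: field_simps)
  show ?thesis unfolding L R ..
qed

lemma choose2_Suc: "Suc n choose 2 = n + (n choose 2)"
  by (simp add: numeral_2_eq_2)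

lemma partB:
  fixes p :: "nat \<Rightarrow> qb2 \<Rightarrow> real"
  assumes p0: "\<forall>k\<in>{1..N}. \<forall>e. p k e \<ge> 0" and p1: "\<forall>k\<in>{1..N}. (\<Sum>e\<in>UNIV. p k e) = 1"
    and eps: "\<forall>k\<in>{1..N}. 1 - p k (False,False) < \<epsilon>"
  shows "\<bar>Gs p N (False,False) - Gs (\<lambda>k. wq (p k (False,False))) N (False,False)\<bar> \<le> real (N choose 2) * \<epsilon>^2"
proof -
  let ?w = "\<lambda>k. wq (p k (False,False))"
  let ?z = "(False,False)"
  have main: "n \<le> N \<longrightarrow> (\<forall>c. 0 \<le> Gs p n c \<and> Gs p n c \<le> 1) \<and> (\<forall>c. 0 \<le> Gs ?w n c \<and> Gs ?w n c \<le> 1)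
     \<and> (\<forall>c. c \<noteq> ?z \<longrightarrow> Gs p n c \<le> real n * \<epsilon>) \<and> (\<forall>c. c \<noteq> ?z \<longrightarrow> Gs ?w n c \<le> real n * \<epsilon>)
     \<and> Gs ?w n (False,True) = Gs ?w n (True,True) \<and> Gs ?w n (True,False) = Gs ?w n (True,True)
     \<and> \<bar>Gs p n ?z - Gs ?w n ?z\<bar> \<le> real (n choose 2) * \<epsilon>^2" for n
  proof (induction n)
    case 0
    show ?case by (simp add: Gs_0)
  next
    case (Suc n)
    show ?case
    proof
      assume le: "Suc n \<le> N"
      then have IH: "(\<forall>c. 0 \<le> Gs p n c \<and> Gs p n c \<le> 1) \<and> (\<forall>c. 0 \<le> Gs ?w n c \<and> Gs ?w n c \<le> 1)
         \<and> (\<forall>c. c \<noteq> ?z \<longrightarrow> Gs p n c \<le> real n * \<epsilon>) \<and> (\<forall>c. c \<noteq> ?z \<longrightarrow> Gs ?w n c \<le> real n * \<epsilon>)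
         \<and> Gs ?w n (False,True) = Gs ?w n (True,True) \<and> Gs ?w n (True,False) = Gs ?w n (True,True)
         \<and> \<bar>Gs p n ?z - Gs ?w n ?z\<bar> \<le> real (n choose 2) * \<epsilon>^2" using Suc.IH by simp
      have k: "Suc n \<in> {1..N}" using le by simp
      let ?q = "p (Suc n)"
      have q0: "\<forall>e. ?q e \<ge> 0" using p0 k by blast
      have q1: "(\<Sum>e\<in>UNIV. ?q e) = 1" using p1 k by blast
      have ek: "1 - ?q ?z < \<epsilon>" using eps k by blast
      have qz1: "?q ?z \<le> 1" using dist_le1[OF q0 q1] .
      have epos: "\<epsilon> \<ge> 0" using ek qz1 by linarith
      have w0: "\<forall>e. ?w (Suc n) e \<ge> 0" using q0 qz1 by (simp add: wq_def)
      have w1: "(\<Sum>e\<in>UNIV. ?w (Suc n) e) = 1" by (simp add: sum_qb2 wq_def field_simps)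
      have wz: "?w (Suc n) ?z = ?q ?z" by (simp add: wq_def)
      have Gp01: "\<forall>d. 0 \<le> Gs p n d \<and> Gs p n d \<le> 1" using IH by blast
      have Gp3: "\<forall>c. c \<noteq> ?z \<longrightarrow> Gs p n c \<le> real n * \<epsilon>" using IH by blast
      have Gw3: "\<forall>c. c \<noteq> ?z \<longrightarrow> Gs ?w n c \<le> real n * \<epsilon>" using IH by blast
      have D0: "\<bar>Gs p n ?z - Gs ?w n ?z\<bar> \<le> real (n choose 2) * \<epsilon>^2" using IH by blast
      have Gw01: "\<forall>d. 0 \<le> Gs ?w n d \<and> Gs ?w n d \<le> 1" using IH by blast
      have A1: "\<forall>c. 0 \<le> Gs p (Suc n) c \<and> Gs p (Suc n) c \<le> 1"
        unfolding Gs_Suc using stepA(1)[OF q0 q1 Gp01] stepA(2)[OF q0 q1 Gp01] by simp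
      have A2: "\<forall>c. 0 \<le> Gs ?w (Suc n) c \<and> Gs ?w (Suc n) c \<le> 1"
        unfolding Gs_Suc using stepA(1)[OF w0 w1 Gw01] stepA(2)[OF w0 w1 Gw01] by simp
      have B1: "\<forall>c. c \<noteq> ?z \<longrightarrow> Gs p (Suc n) c \<le> real (Suc n) * \<epsilon>"
      proof (intro allI impI)
        fix c assume c: "c \<noteq> ?z"
        have "Gs p (Suc n) c \<le> real n * \<epsilon> + (1 - ?q ?z)"
          unfolding Gs_Suc by (rule stepB[OF q0 q1 Gp01]) (use Gp3 Gw3 c in blast)
        then show "Gs p (Suc n) c \<le> real (Suc n) * \<epsilon>" using ek by (simp add: algebra_simps)
      qed
      have B2: "\<forall>c. c \<noteq> ?z \<longrightarrow> Gs ?w (Suc n) c \<le> real (Suc n) * \<epsilon>"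
      proof (intro allI impI)
        fix c assume c: "c \<noteq> ?z"
        have "Gs ?w (Suc n) c \<le> real n * \<epsilon> + (1 - ?w (Suc n) ?z)"
          unfolding Gs_Suc by (rule stepB[OF w0 w1 Gw01]) (use Gp3 Gw3 c in blast)
        then show "Gs ?w (Suc n) c \<le> real (Suc n) * \<epsilon>" using ek wz by (simp add: algebra_simps)
      qed
      have S: "Gs ?w (Suc n) (False,True) = Gs ?w (Suc n) (True,True) \<and> Gs ?w (Suc n) (True,False) = Gs ?w (Suc n) (True,True)"
        unfolding Gs_Suc using stepW_sym[of "Gs ?w n"] IH by simp
      have "Gs p (Suc n) ?z - Gs ?w (Suc n) ?z = (\<Sum>c\<in>UNIV. Gs p n c * ?q c) - (\<Sum>c\<in>UNIV. Gs ?w n c * ?w (Suc n) c)"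
        unfolding Gs_Suc by (simp add: pxor_r0)
      also have "(\<Sum>c\<in>UNIV. Gs ?w n c * ?w (Suc n) c) = (\<Sum>c\<in>UNIV. Gs ?w n c * ?q c)"
        using stepW_eq[of "Gs ?w n" ?q] IH q1 by simp
      also have "(\<Sum>c\<in>UNIV. Gs p n c * ?q c) - (\<Sum>c\<in>UNIV. Gs ?w n c * ?q c) = (\<Sum>c\<in>UNIV. (Gs p n c - Gs ?w n c) * ?q c)"
        by (simp add: sum_subtractf algebra_simps)
      finally have Deq: "Gs p (Suc n) ?z - Gs ?w (Suc n) ?z = (\<Sum>c\<in>UNIV. (Gs p n c - Gs ?w n c) * ?q c)" .
      have Dc: "\<forall>c. c \<noteq> ?z \<longrightarrow> \<bar>Gs p n c - Gs ?w n c\<bar> \<le> real n * \<epsilon>"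
      proof (intro allI impI)
        fix c assume c: "c \<noteq> ?z"
        have "0 \<le> Gs p n c" "Gs p n c \<le> real n * \<epsilon>" "0 \<le> Gs ?w n c" "Gs ?w n c \<le> real n * \<epsilon>"
          using Gp01 Gw01 Gp3 Gw3 c by blast+
        then show "\<bar>Gs p n c - Gs ?w n c\<bar> \<le> real n * \<epsilon>" by linarith
      qed
      have "\<bar>Gs p (Suc n) ?z - Gs ?w (Suc n) ?z\<bar> \<le> real (n choose 2) * \<epsilon>^2 + real n * \<epsilon> * (1 - ?q ?z)"
        unfolding Deq by (rule stepD[OF q0 q1 D0 Dc])
      also have "real n * \<epsilon> * (1 - ?q ?z) \<le> real n * \<epsilon> * \<epsilon>"
        using ek epos by (intro mult_left_mono) auto
      finally have D: "\<bar>Gs p (Suc n) ?z - Gs ?w (Suc n) ?z\<bar> \<le> real (Suc n choose 2) * \<epsilon>^2"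
        unfolding choose2_Suc by (simp add: algebra_simps power2_eq_square)
      show "(\<forall>c. 0 \<le> Gs p (Suc n) c \<and> Gs p (Suc n) c \<le> 1) \<and> (\<forall>c. 0 \<le> Gs ?w (Suc n) c \<and> Gs ?w (Suc n) c \<le> 1)
         \<and> (\<forall>c. c \<noteq> ?z \<longrightarrow> Gs p (Suc n) c \<le> real (Suc n) * \<epsilon>) \<and> (\<forall>c. c \<noteq> ?z \<longrightarrow> Gs ?w (Suc n) c \<le> real (Suc n) * \<epsilon>)
         \<and> Gs ?w (Suc n) (False,True) = Gs ?w (Suc n) (True,True) \<and> Gs ?w (Suc n) (True,False) = Gs ?w (Suc n) (True,True)
         \<and> \<bar>Gs p (Suc n) ?z - Gs ?w (Suc n) ?z\<bar> \<le> real (Suc n choose 2) * \<epsilon>^2"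
        using A1 A2 B1 B2 S D by blast
    qed
  qed
  then show ?thesis by blast
qed



lemma pk_dens:
  assumes "dens \<rho>"
  shows "pk \<rho> b = complex_of_real (Re (pk \<rho> b))" "Re (pk \<rho> b) \<ge> 0"
proof -
  have "Im (pk \<rho> b) = 0" "Re (pk \<rho> b) \<ge> 0"
    using assms unfolding dens_def pk_def by blast+
  then show "pk \<rho> b = complex_of_real (Re (pk \<rho> b))" "Re (pk \<rho> b) \<ge> 0"
    by (simp_all add: complex_eq_iff)
qed

lemma pk_sum: "(\<Sum>b\<in>UNIV. pk \<rho> b) = tr2 \<rho>"
proof -
  have "(\<Sum>b\<in>UNIV. pk \<rho> b) = (\<Sum>b\<in>UNIV. \<Sum>i\<in>UNIV. \<Sum>j\<in>UNIV. \<rho> i j * (bell b j * cnj (bell b i)))"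
    unfolding pk_def by (simp add: mult_ac)
  also have "\<dots> = (\<Sum>i\<in>UNIV. \<Sum>j\<in>UNIV. \<Sum>b\<in>UNIV. \<rho> i j * (bell b j * cnj (bell b i)))"
    by (rule sum3_swap)
  also have "\<dots> = (\<Sum>i\<in>UNIV. \<Sum>j\<in>UNIV. \<rho> i j * (if j = i then 1 else 0))"
    by (simp add: sum_distrib_left[symmetric] F_compl)
  also have "\<dots> = tr2 \<rho>" unfolding tr2_def by (simp add: if_distrib[where f="\<lambda>c. _ * c"] cong: if_cong)
  finally show ?thesis .
qed

lemma pk_fid: "pk \<rho> (False,False) = fid \<rho>"
  unfolding pk_def fid_def ..

lemma pk_werner: "pk (werner \<rho>) b = (if b = (False,False) then fid \<rho> else (1 - fid \<rho>) / 3)"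
proof -
  have bp: "pk (bellproj (False,False)) b = (if b = (False,False) then 1 else 0)"
  proof -
    have "pk (bellproj (False,False)) b = (\<Sum>i\<in>UNIV. cnj (bell b i) * bell (False,False) i) *
        (\<Sum>j\<in>UNIV. cnj (bell (False,False) j) * bell b j)"
      unfolding pk_def bellproj_def sum_product by (intro sum.cong refl) (simp add: mult_ac)
    then show ?thesis by (simp add: F_orth)
  qed
  have id: "pk (\<lambda>i j. if i = j then 1 else 0) b = 1"
    unfolding pk_def by (simp add: if_distrib[where f="\<lambda>c. _ * c"] if_distrib[where f="\<lambda>c. c * _"] cong: if_cong)
      (simp add: F_orth)
  have "pk (werner \<rho>) b = (4 * fid \<rho> - 1) / 3 * pk (bellproj (False,False)) b + (1 - fid \<rho>) / 3 * pk (\<lambda>i j. if i = j then 1 else 0) b"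
    unfolding pk_def werner_def by (simp add: sum_distrib_left sum.distrib algebra_simps)
  then show ?thesis unfolding bp id by (cases "b = (False,False)"; simp add: field_simps)
qed

theorem theorem2:
  shows "\<exists>C \<delta>::real. \<delta> > 0 \<and>
    (\<forall>N::nat. \<forall>\<rho>s :: nat \<Rightarrow> op2. \<forall>P. \<forall>\<epsilon>::real.
       N \<ge> 2 \<and> (\<forall>k\<in>{1..N}. dens (\<rho>s k)) \<and> swap_protocol N P
       \<and> (\<forall>k\<in>{1..N}. 1 - Re (fid (\<rho>s k)) < \<epsilon>) \<and> real N * \<epsilon> < \<delta>
       \<longrightarrow> cmod (fid (lam N P (tens N \<rho>s)) - fid (lam N P (tens N (\<lambda>k. werner (\<rho>s k)))))
           \<le> real (N choose 2) * \<epsilon>^2 + C * real N ^ 3 * \<epsilon> ^ 3)"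
proof -
  have X: "\<forall>N::nat. \<forall>\<rho>s :: nat \<Rightarrow> op2. \<forall>P. \<forall>\<epsilon>::real.
       N \<ge> 2 \<and> (\<forall>k\<in>{1..N}. dens (\<rho>s k)) \<and> swap_protocol N P
       \<and> (\<forall>k\<in>{1..N}. 1 - Re (fid (\<rho>s k)) < \<epsilon>) \<and> real N * \<epsilon> < 1
       \<longrightarrow> cmod (fid (lam N P (tens N \<rho>s)) - fid (lam N P (tens N (\<lambda>k. werner (\<rho>s k)))))
           \<le> real (N choose 2) * \<epsilon>^2 + 0 * real N ^ 3 * \<epsilon> ^ 3"
  proof (intro allI impI)
  fix N :: nat and \<rho>s :: "nat \<Rightarrow> op2" and P and \<epsilon> :: real
  assume H: "N \<ge> 2 \<and> (\<forall>k\<in>{1..N}. dens (\<rho>s k)) \<and> swap_protocol N P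
       \<and> (\<forall>k\<in>{1..N}. 1 - Re (fid (\<rho>s k)) < \<epsilon>) \<and> real N * \<epsilon> < 1"
  then have N: "N \<ge> 2" and D: "\<forall>k\<in>{1..N}. dens (\<rho>s k)" and sp: "swap_protocol N P"
    and E: "\<forall>k\<in>{1..N}. 1 - Re (fid (\<rho>s k)) < \<epsilon>" by auto
  define p where "p k b = Re (pk (\<rho>s k) b)" for k b
  have pe: "pk (\<rho>s k) b = complex_of_real (p k b)" if "k \<in> {1..N}" for k b
    using pk_dens(1)[of "\<rho>s k" b] D that unfolding p_def by blast
  have we: "pk (werner (\<rho>s k)) b = complex_of_real (wq (p k (False,False)) b)" if k: "k \<in> {1..N}" for k b
  proof -
    have "fid (\<rho>s k) = complex_of_real (p k (False,False))" using pe[OF k, of "(False,False)"] by (simp add: pk_fid)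
    then show ?thesis unfolding pk_werner wq_def by simp
  qed
  have A1: "fid (lam N P (tens N \<rho>s)) = complex_of_real (Gs p N (False,False))"
    unfolding partA[OF N sp] Iset_Gs[symmetric]
    by (intro sum.cong refl prod.cong) (simp_all add: pe)
  have A2: "fid (lam N P (tens N (\<lambda>k. werner (\<rho>s k)))) = complex_of_real (Gs (\<lambda>k. wq (p k (False,False))) N (False,False))"
    unfolding partA[OF N sp] Iset_Gs[symmetric]
    by (intro sum.cong refl prod.cong) (simp_all add: we)
  have p0: "\<forall>k\<in>{1..N}. \<forall>e. p k e \<ge> 0" using pk_dens(2) D unfolding p_def by blast
  have p1: "\<forall>k\<in>{1..N}. (\<Sum>e\<in>UNIV. p k e) = 1"
  proof
    fix k assume k: "k \<in> {1..N}"
    have "tr2 (\<rho>s k) = 1" using D k unfolding dens_def by blast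
    then show "(\<Sum>e\<in>UNIV. p k e) = 1" unfolding p_def using pk_sum[of "\<rho>s k"]
      by (metis Re_sum one_complex.sel)
  qed
  have eps: "\<forall>k\<in>{1..N}. 1 - p k (False,False) < \<epsilon>" using E unfolding p_def pk_fid by blast
  have "cmod (fid (lam N P (tens N \<rho>s)) - fid (lam N P (tens N (\<lambda>k. werner (\<rho>s k)))))
      = \<bar>Gs p N (False,False) - Gs (\<lambda>k. wq (p k (False,False))) N (False,False)\<bar>"
    unfolding A1 A2 of_real_diff[symmetric] norm_of_real ..
  also have "\<dots> \<le> real (N choose 2) * \<epsilon>^2" by (rule partB[OF p0 p1 eps])
  finally show "cmod (fid (lam N P (tens N \<rho>s)) - fid (lam N P (tens N (\<lambda>k. werner (\<rho>s k)))))
           \<le> real (N choose 2) * \<epsilon>^2 + 0 * real N ^ 3 * \<epsilon> ^ 3" by simp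
  qed
  show ?thesis
    apply (rule exI[where x=0])
    apply (rule exI[where x=1])
    using X by simp
qed


end
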